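(* Let $S$ be a set of $n$ points in the plane in convex position. Then the number of non-crossing path partitions (ncp partitions) that $S$ admits is $\mathcal{O}^*(5.610718614^n)$.
   Context: A non-crossing graph on a finite point set $S$ in the plane is a graph with vertex set $S$ whose edges are straight line segments, no two of which cross. A non-crossing path partition (ncp partition) of $S$ is a non-crossing graph on $S$ every connected component of which is a path; isolated vertices (singletons) are allowed and are regarded as paths of length $0$. The notation $\mathcal{O}^*(c^n)$ means $O(p(n)\,c^n)$ for some polynomial $p$, i.e. polynomial factors are neglected and only the dominating exponential term is given. *)

theory Defs
  imports "HOL-Analysis.Analysis"
begin

type_synonym point = "real \<times> real"

definition convex_position :: "point set \<Rightarrow> bool" where
  "convex_position S \<longleftrightarrow> (\<forall>p\<in>S. p \<notin> convex hull (S - {p}))"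

text \<open>Straight-line edges on S are 2-element subsets of S; the drawn edge is their convex hull
  (the closed segment).\<close>
definition edges_on :: "point set \<Rightarrow> point set set \<Rightarrow> bool" where
  "edges_on S E \<longleftrightarrow> (\<forall>e\<in>E. \<exists>a b. a \<in> S \<and> b \<in> S \<and> a \<noteq> b \<and> e = {a, b})"

definition non_crossing :: "point set set \<Rightarrow> bool" where
  "non_crossing E \<longleftrightarrow>
     (\<forall>e1\<in>E. \<forall>e2\<in>E. e1 \<noteq> e2 \<longrightarrow> convex hull e1 \<inter> convex hull e2 \<subseteq> e1 \<inter> e2)"

definition adj :: "point set set \<Rightarrow> (point \<times> point) set" where
  "adj E = {(a, b). {a, b} \<in> E}"

definition component :: "point set \<Rightarrow> point set set \<Rightarrow> point \<Rightarrow> point set" where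
  "component S E v = {w \<in> S. (v, w) \<in> (adj E)\<^sup>*}"

definition is_path_component :: "point set set \<Rightarrow> point set \<Rightarrow> bool" where
  "is_path_component E C \<longleftrightarrow>
     (\<exists>vs. distinct vs \<and> set vs = C \<and>
        {e \<in> E. e \<subseteq> C} = {{vs ! i, vs ! Suc i} | i. Suc i < length vs})"

definition ncp_partition :: "point set \<Rightarrow> point set set \<Rightarrow> bool" where
  "ncp_partition S E \<longleftrightarrow> edges_on S E \<and> non_crossing E \<and>
     (\<forall>v\<in>S. is_path_component E (component S E v))"

end

theory Submission
  imports Defs
begin


lemma conv_le:
  fixes u v :: "nat \<Rightarrow> real"
  assumes "\<And>i. 0 \<le> u i" "\<And>i. 0 \<le> v i"
  shows "(\<Sum>m\<le>M. \<Sum>i\<le>m. u i * v (m - i)) \<le> (\<Sum>i\<le>M. u i) * (\<Sum>j\<le>M. v j)"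
proof -
  have "(\<Sum>m\<le>M. \<Sum>i\<le>m. u i * v (m - i)) = (\<Sum>(i,j)\<in>{(i,j). i+j \<le> M}. u i * v j)"
    using sum.triangle_reindex_eq[of "\<lambda>i j. u i * v j" M] by simp
  also have "\<dots> \<le> (\<Sum>(i,j)\<in>{..M}\<times>{..M}. u i * v j)"
    by (rule sum_mono2) (auto intro: mult_nonneg_nonneg assms)
  also have "\<dots> = (\<Sum>i\<le>M. u i) * (\<Sum>j\<le>M. v j)"
    by (simp add: sum_product sum.cartesian_product)
  finally show ?thesis .
qed

lemma conv3_le:
  fixes u v w :: "nat \<Rightarrow> real"
  assumes "\<And>i. 0 \<le> u i" "\<And>i. 0 \<le> v i" "\<And>i. 0 \<le> w i"
  shows "(\<Sum>m\<le>M. \<Sum>l\<le>m. \<Sum>k\<le>m-l. u l * w k * v (m - l - k))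
     \<le> (\<Sum>i\<le>M. u i) * (\<Sum>j\<le>M. w j) * (\<Sum>j\<le>M. v j)"
proof -
  define z where "z s = (\<Sum>k\<le>s. w k * v (s - k))" for s
  have z0: "0 \<le> z s" for s unfolding z_def by (intro sum_nonneg mult_nonneg_nonneg assms)
  have "(\<Sum>m\<le>M. \<Sum>l\<le>m. \<Sum>k\<le>m-l. u l * w k * v (m - l - k)) = (\<Sum>m\<le>M. \<Sum>l\<le>m. u l * z (m - l))"
    unfolding z_def by (simp add: sum_distrib_left mult.assoc diff_diff_left)
  also have "\<dots> \<le> (\<Sum>i\<le>M. u i) * (\<Sum>j\<le>M. z j)"
    by (rule conv_le) (auto intro: assms z0)
  also have "(\<Sum>j\<le>M. z j) \<le> (\<Sum>j\<le>M. w j) * (\<Sum>j\<le>M. v j)"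
    unfolding z_def by (rule conv_le) (auto intro: assms)
  then have "(\<Sum>i\<le>M. u i) * (\<Sum>j\<le>M. z j) \<le> (\<Sum>i\<le>M. u i) * ((\<Sum>j\<le>M. w j) * (\<Sum>j\<le>M. v j))"
    by (intro mult_left_mono sum_nonneg assms)
  finally show ?thesis by (simp add: mult.assoc)
qed

definition triT :: "(nat\<Rightarrow>nat) \<Rightarrow> (nat\<Rightarrow>nat) \<Rightarrow> (nat\<Rightarrow>nat) \<Rightarrow> nat \<Rightarrow> nat \<Rightarrow> nat \<Rightarrow> nat" where
  "triT cA cG cX l k r = (cA l + cG (l+1)) * (cA r + cG (r+1)) * cA k + (cA l + cG (l+1)) * cG (k+1) * cA r
     + cA l * cG (k+1) * (cA r + cG (r+1)) + cA l * cX (k+2) * cA r"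

lemma pw2: "i \<le> m \<Longrightarrow> (x::real)^(m+2) = x * x^(i+1) * x^(m-i)"
proof -
  assume "i \<le> m"
  then have "m+2 = 1 + (i+1) + (m-i)" by simp
  then show ?thesis by (metis power_add power_one_right)
qed

lemma analytic:
  fixes cA cG cX :: "nat \<Rightarrow> nat"
  assumes hA0: "cA 0 \<le> 1" and hA1: "cA 1 \<le> cA 0 + cG 1" and hA2: "cA 2 \<le> cA 1 + cG 2"
  and hA: "\<And>m. cA (m+3) \<le> cA (m+2) + cG (m+3) + (\<Sum>l\<le>m. \<Sum>k\<le>m-l. triT cA cG cX l k (m-l-k))"
  and hG0: "cG 0 = 0" and hG1: "cG 1 = 0"
  and hG: "\<And>m. cG (m+2) \<le> (\<Sum>i\<le>m. cG (i+1) * cA (m-i) + cA i * (cA (m-i) + cG (m-i+1)))"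
  and hX0: "cX 0 = 0" and hX1: "cX 1 = 0" and hX2: "cX 2 = 0"
  and hX: "\<And>m. cX (m+3) \<le> (\<Sum>l\<le>m. cG (l+1) * cG (m-l+1) + cA l * (cX (m-l+2) + cG (m-l+1)))"
  shows "real (cA n) \<le> (159333/100000) * (5610718614/1000000000)^n"
proof -
  define x :: real where "x = 1000000000/5610718614"
  define a :: real where "a = 159333/100000"
  define g :: real where "g = 291655309493/1562500000000"
  define X :: real where "X = 17083781927/781250000000"
  have x0: "0 < x" unfolding x_def by simp
  define p where "p n = real (cA n) * x^n" for n
  define q where "q n = real (cG n) * x^n" for n
  define r where "r n = real (cX n) * x^n" for n
  have p0: "0 \<le> p n" for n unfolding p_def using x0 by simp
  have q0: "0 \<le> q n" for n unfolding q_def using x0 by simp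
  have r0: "0 \<le> r n" for n unfolding r_def using x0 by simp
  have qz0: "q 0 = 0" "q 1 = 0" unfolding q_def using hG0 hG1 by auto
  have rz0: "r 0 = 0" "r 1 = 0" "r 2 = 0" unfolding r_def using hX0 hX1 hX2 by auto
  define SA where "SA N = (\<Sum>n\<le>N. p n)" for N
  define SG where "SG N = (\<Sum>n\<le>N. q n)" for N
  define SX where "SX N = (\<Sum>n\<le>N. r n)" for N
  have SA0: "0 \<le> SA N" for N unfolding SA_def by (intro sum_nonneg p0)
  have SG0: "0 \<le> SG N" for N unfolding SG_def by (intro sum_nonneg q0)
  have SX0: "0 \<le> SX N" for N unfolding SX_def by (intro sum_nonneg r0)
  have SGs: "(\<Sum>i\<le>M. q (i+1)) = SG (M+1)" for M
    unfolding SG_def using sum.atMost_Suc_shift[of q M] qz0 by simp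
  have SXs: "(\<Sum>i\<le>M. r (i+2)) = SX (M+2)" for M
  proof -
    have "SX (M+2) = r 0 + (r 1 + (\<Sum>i\<le>M. r (i+2)))"
      unfolding SX_def using sum.atMost_Suc_shift[of r "Suc M"] sum.atMost_Suc_shift[of "\<lambda>i. r (Suc i)" M]
      by (simp add: numeral_2_eq_2)
    then show ?thesis using rz0 by simp
  qed
  have qrec: "q (m+2) \<le> x * (\<Sum>i\<le>m. q (i+1) * p (m-i) + p i * (x * p (m-i) + q (m-i+1)))" for m
  proof -
    have "q (m+2) \<le> real (\<Sum>i\<le>m. cG (i+1) * cA (m-i) + cA i * (cA (m-i) + cG (m-i+1))) * x^(m+2)"
      unfolding q_def using hG[of m] x0 by (intro mult_right_mono) (simp_all only: of_nat_le_iff, simp)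
    also have "\<dots> = (\<Sum>i\<le>m. real (cG (i+1) * cA (m-i) + cA i * (cA (m-i) + cG (m-i+1))) * x^(m+2))"
      by (simp add: sum_distrib_right)
    also have "\<dots> = (\<Sum>i\<le>m. x * (q (i+1) * p (m-i) + p i * (x * p (m-i) + q (m-i+1))))"
    proof (rule sum.cong[OF refl])
      fix i assume "i \<in> {..m}"
      then have im: "i \<le> m" by simp
      have e: "x^(m+2) = x*x*(x^i*x^(m-i))" using im
        by (simp add: power_add[symmetric])
      show "real (cG (i+1) * cA (m-i) + cA i * (cA (m-i) + cG (m-i+1))) * x^(m+2) =
          x * (q (i+1) * p (m-i) + p i * (x * p (m-i) + q (m-i+1)))"
        unfolding p_def q_def e by (simp add: algebra_simps)
    qed
    finally show ?thesis by (simp add: sum_distrib_left)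
  qed
  have rrec: "r (m+3) \<le> x * (\<Sum>l\<le>m. q (l+1) * q (m-l+1) + p l * (r (m-l+2) + x * q (m-l+1)))" for m
  proof -
    have "r (m+3) \<le> real (\<Sum>l\<le>m. cG (l+1) * cG (m-l+1) + cA l * (cX (m-l+2) + cG (m-l+1))) * x^(m+3)"
      unfolding r_def using hX[of m] x0 by (intro mult_right_mono) (simp_all only: of_nat_le_iff, simp)
    also have "\<dots> = (\<Sum>l\<le>m. real (cG (l+1) * cG (m-l+1) + cA l * (cX (m-l+2) + cG (m-l+1))) * x^(m+3))"
      by (simp add: sum_distrib_right)
    also have "\<dots> = (\<Sum>l\<le>m. x * (q (l+1) * q (m-l+1) + p l * (r (m-l+2) + x * q (m-l+1))))"
    proof (rule sum.cong[OF refl])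
      fix l assume "l \<in> {..m}"
      then have im: "l \<le> m" by simp
      have e1: "x^l*x^(m-l) = x^m" using im by (simp add: power_add[symmetric])
      have e: "x^(m+3) = x*x*x*(x^l*x^(m-l))" unfolding e1 by (simp add: power_add numeral_3_eq_3)
      show "real (cG (l+1) * cG (m-l+1) + cA l * (cX (m-l+2) + cG (m-l+1))) * x^(m+3) =
          x * (q (l+1) * q (m-l+1) + p l * (r (m-l+2) + x * q (m-l+1)))"
        unfolding p_def q_def r_def e by (simp add: algebra_simps)
    qed
    finally show ?thesis by (simp add: sum_distrib_left)
  qed
  define d where "d j = x * p j + q (j+1)" for j
  have d0: "0 \<le> d j" for j unfolding d_def using x0 p0 q0 by (simp add: add_nonneg_nonneg)
  define F where "F l k rr = d l * p k * d rr + d l * q (k+1) * p rr + p l * q (k+1) * d rr + p l * r (k+2) * p rr" for l k rr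
  have arec: "p (m+3) \<le> x * p (m+2) + q (m+3) + x * (\<Sum>l\<le>m. \<Sum>k\<le>m-l. F l k (m-l-k))" for m
  proof -
    have "p (m+3) \<le> real (cA (m+2) + cG (m+3) + (\<Sum>l\<le>m. \<Sum>k\<le>m-l. triT cA cG cX l k (m-l-k))) * x^(m+3)"
      unfolding p_def using hA[of m] x0 by (intro mult_right_mono) (simp_all only: of_nat_le_iff, simp)
    also have "\<dots> = x * p (m+2) + q (m+3) + (\<Sum>l\<le>m. \<Sum>k\<le>m-l. real (triT cA cG cX l k (m-l-k)) * x^(m+3))"
    proof -
      have e3: "x^(m+3) = x * x^(m+2)" by (simp add: numeral_3_eq_3 numeral_2_eq_2)
      have t1: "real (cA (m+2)) * x^(m+3) = x * p (m+2)" unfolding p_def e3 by simp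
      have t2: "real (cG (m+3)) * x^(m+3) = q (m+3)" unfolding q_def by simp
      have t3: "real (\<Sum>l\<le>m. \<Sum>k\<le>m-l. triT cA cG cX l k (m-l-k)) * x^(m+3)
          = (\<Sum>l\<le>m. \<Sum>k\<le>m-l. real (triT cA cG cX l k (m-l-k)) * x^(m+3))"
        by (simp only: of_nat_sum sum_distrib_right)
      show ?thesis unfolding of_nat_add distrib_right t1 t2 t3 by simp
    qed
    also have "(\<Sum>l\<le>m. \<Sum>k\<le>m-l. real (triT cA cG cX l k (m-l-k)) * x^(m+3)) = (\<Sum>l\<le>m. \<Sum>k\<le>m-l. x * F l k (m-l-k))"
    proof (intro sum.cong refl)
      fix l k assume "l \<in> {..m}" "k \<in> {..m-l}"
      then have im: "l + k \<le> m" by simp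
      have e1: "x^l*x^k*x^(m-l-k) = x^m" using im by (simp add: power_add[symmetric])
      have e: "x^(m+3) = x*x*x*(x^l*x^k*x^(m-l-k))" unfolding e1 by (simp add: power_add numeral_3_eq_3)
      show "real (triT cA cG cX l k (m-l-k)) * x^(m+3) = x * F l k (m-l-k)"
        unfolding F_def d_def p_def q_def r_def triT_def e by (simp add: algebra_simps)
    qed
    finally show ?thesis by (simp add: sum_distrib_left)
  qed
  have SAs: "SA (Suc M) = p 0 + (\<Sum>n\<le>M. p (Suc n))" for M
    unfolding SA_def by (rule sum.atMost_Suc_shift)
  have key: "SA N \<le> a \<and> SG N \<le> g \<and> SX N \<le> X" for N
  proof (induction N rule: less_induct)
    case (less N)
    have bG: "SG N \<le> g"
    proof (cases "N < 2")
      case True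
      then have "SG N = 0" unfolding SG_def using qz0 
        by (cases N; cases "N - 1") (auto simp: numeral_2_eq_2)
      then show ?thesis unfolding g_def by simp
    next
      case False
      then obtain M where M: "N = M + 2" by (metis add.commute le_Suc_ex not_less)
      have "SG N = q 0 + (q 1 + (\<Sum>m\<le>M. q (m+2)))"
        unfolding SG_def M using sum.atMost_Suc_shift[of q "Suc M"] sum.atMost_Suc_shift[of "\<lambda>i. q (Suc i)" M]
        by (simp add: numeral_2_eq_2)
      also have "\<dots> = (\<Sum>m\<le>M. q (m+2))" using qz0 by simp
      also have "\<dots> \<le> (\<Sum>m\<le>M. x * (\<Sum>i\<le>m. q (i+1) * p (m-i) + p i * (x * p (m-i) + q (m-i+1))))"
        by (rule sum_mono) (rule qrec)
      also have "\<dots> = x * ((\<Sum>m\<le>M. \<Sum>i\<le>m. q (i+1) * p (m-i)) + (\<Sum>m\<le>M. \<Sum>i\<le>m. p i * d (m-i)))"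
        unfolding d_def by (simp add: sum.distrib distrib_left flip: sum_distrib_left)
      also have "\<dots> \<le> x * ((\<Sum>i\<le>M. q (i+1)) * (\<Sum>j\<le>M. p j) + (\<Sum>i\<le>M. p i) * (\<Sum>j\<le>M. d j))"
        using x0 by (intro mult_left_mono add_mono conv_le) (auto intro: p0 q0 d0)
      also have "(\<Sum>j\<le>M. d j) = x * SA M + SG (M+1)"
        unfolding d_def SA_def sum.distrib SGs[symmetric] by (simp add: sum_distrib_left)
      finally have "SG N \<le> x * (SG (M+1) * SA M + SA M * (x * SA M + SG (M+1)))"
        unfolding SGs SA_def by simp
      also have "\<dots> \<le> x * (g * a + a * (x * a + g))"
        using less[of M] less[of "M+1"] M SA0[of M] SG0[of "M+1"] x0
        by (intro mult_left_mono add_mono mult_mono) auto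
      also have "\<dots> \<le> g" unfolding x_def a_def g_def by simp
      finally show ?thesis .
    qed
    have bX: "SX N \<le> X"
    proof (cases "N < 3")
      case True
      then have "SX N = 0" unfolding SX_def using rz0 
        by (cases N; cases "N - 1"; cases "N - 2") (auto simp: numeral_2_eq_2 numeral_3_eq_3)
      then show ?thesis unfolding X_def by simp
    next
      case False
      then obtain M where M: "N = M + 3" by (metis add.commute le_Suc_ex not_less)
      have "SX N = r 0 + (r 1 + (r 2 + (\<Sum>m\<le>M. r (m+3))))"
        unfolding SX_def M using sum.atMost_Suc_shift[of r "Suc (Suc M)"] sum.atMost_Suc_shift[of "\<lambda>i. r (Suc i)" "Suc M"]
           sum.atMost_Suc_shift[of "\<lambda>i. r (Suc (Suc i))" M]
        by (simp add: numeral_2_eq_2 numeral_3_eq_3)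
      also have "\<dots> = (\<Sum>m\<le>M. r (m+3))" using rz0 by simp
      also have "\<dots> \<le> (\<Sum>m\<le>M. x * (\<Sum>l\<le>m. q (l+1) * q (m-l+1) + p l * (r (m-l+2) + x * q (m-l+1))))"
        by (rule sum_mono) (rule rrec)
      also have "\<dots> = x * ((\<Sum>m\<le>M. \<Sum>i\<le>m. q (i+1) * q (m-i+1)) + (\<Sum>m\<le>M. \<Sum>i\<le>m. p i * (r (m-i+2) + x * q (m-i+1))))"
        by (simp add: sum.distrib distrib_left flip: sum_distrib_left)
      also have "\<dots> \<le> x * ((\<Sum>i\<le>M. q (i+1)) * (\<Sum>j\<le>M. q (j+1)) + (\<Sum>i\<le>M. p i) * (\<Sum>j\<le>M. r (j+2) + x * q (j+1)))"
      proof -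
        have c1: "(\<Sum>m\<le>M. \<Sum>i\<le>m. q (i+1) * q (m-i+1)) \<le> (\<Sum>i\<le>M. q (i+1)) * (\<Sum>j\<le>M. q (j+1))"
          using conv_le[of "\<lambda>i. q (i+1)" "\<lambda>j. q (j+1)" M] q0 by simp
        have c2: "(\<Sum>m\<le>M. \<Sum>i\<le>m. p i * (r (m-i+2) + x * q (m-i+1))) \<le> (\<Sum>i\<le>M. p i) * (\<Sum>j\<le>M. r (j+2) + x * q (j+1))"
          using conv_le[of p "\<lambda>j. r (j+2) + x * q (j+1)" M] p0 q0 r0 x0 by (simp add: add_nonneg_nonneg)
        show ?thesis using x0 c1 c2 by (intro mult_left_mono add_mono) auto
      qed
      also have "(\<Sum>j\<le>M. r (j+2) + x * q (j+1)) = SX (M+2) + x * SG (M+1)"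
        unfolding sum.distrib SGs[symmetric] SXs[symmetric] by (simp add: sum_distrib_left)
      finally have "SX N \<le> x * (SG (M+1) * SG (M+1) + SA M * (SX (M+2) + x * SG (M+1)))"
        unfolding SGs SA_def by simp
      also have "\<dots> \<le> x * (g * g + a * (X + x * g))"
        using less[of M] less[of "M+1"] less[of "M+2"] M SA0[of M] SG0[of "M+1"] SX0[of "M+2"] x0
        by (intro mult_left_mono add_mono mult_mono) auto
      also have "\<dots> \<le> X" unfolding x_def a_def g_def X_def by simp
      finally show ?thesis .
    qed
    have bA: "SA N \<le> a"
    proof (cases N)
      case 0
      then show ?thesis unfolding SA_def p_def a_def using hA0 by simp
    next
      case (Suc M)
      define e where "e n = (if n < 3 then 0 else x * (\<Sum>l\<le>n-3. \<Sum>k\<le>n-3-l. F l k (n-3-l-k)))" for n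
      have prec: "p (Suc n) \<le> x * p n + q (Suc n) + e (Suc n)" for n
      proof -
        consider "n = 0" | "n = 1" | m where "n = m + 2" by (metis One_nat_def add_2_eq_Suc' not0_implies_Suc)
        then show ?thesis
        proof cases
          case 1
          have "real (cA 1) \<le> real (cA 0) + real (cG 1)" using hA1 by linarith
          then have "real (cA 1) * x \<le> (real (cA 0) + real (cG 1)) * x" using x0 by (intro mult_right_mono) auto
          then show ?thesis using 1 unfolding p_def q_def e_def by (simp add: algebra_simps)
        next
          case 2
          have "real (cA 2) \<le> real (cA 1) + real (cG 2)" using hA2 by linarith
          then have "real (cA 2) * x^2 \<le> (real (cA 1) + real (cG 2)) * x^2" using x0 by (intro mult_right_mono) auto
          then show ?thesis using 2 unfolding p_def q_def e_def by (simp add: algebra_simps power2_eq_square numeral_2_eq_2)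
        next
          case 3
          have "e (Suc n) = x * (\<Sum>l\<le>m. \<Sum>k\<le>m-l. F l k (m-l-k))" unfolding e_def 3 by simp
          then show ?thesis using arec[of m] 3 by (simp add: numeral_3_eq_3 numeral_2_eq_2)
        qed
      qed
      have "SA N = p 0 + (\<Sum>n\<le>M. p (Suc n))" unfolding Suc SAs ..
      also have "\<dots> \<le> p 0 + (\<Sum>n\<le>M. x * p n + q (Suc n) + e (Suc n))"
        by (intro add_left_mono sum_mono prec)
      also have "\<dots> = p 0 + x * SA M + SG (Suc M) + (\<Sum>n\<le>M. e (Suc n))"
        using SGs[of M] by (simp add: sum.distrib SA_def sum_distrib_left)
      also have "(\<Sum>n\<le>M. e (Suc n)) \<le> x * ((x*a+g)*a*(x*a+g) + (x*a+g)*g*a + a*g*(x*a+g) + a*X*a)"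
      proof (cases "M < 2")
        case True
        then have "(\<Sum>n\<le>M. e (Suc n)) = 0" unfolding e_def by (intro sum.neutral) auto
        moreover have "0 \<le> x * ((x*a+g)*a*(x*a+g) + (x*a+g)*g*a + a*g*(x*a+g) + a*X*a)"
          unfolding x_def a_def g_def X_def by simp
        ultimately show ?thesis by simp
      next
        case False
        then obtain K where K: "M = K + 2" by (metis add.commute le_Suc_ex not_less)
        have "(\<Sum>n\<le>M. e (Suc n)) = e 1 + (e 2 + (\<Sum>k\<le>K. e (k+3)))"
          unfolding K using sum.atMost_Suc_shift[of "\<lambda>n. e (Suc n)" "Suc K"] sum.atMost_Suc_shift[of "\<lambda>i. e (Suc (Suc i))" K]
          by (simp add: numeral_2_eq_2 numeral_3_eq_3)
        also have "\<dots> = (\<Sum>k\<le>K. x * (\<Sum>l\<le>k. \<Sum>j\<le>k-l. F l j (k-l-j)))"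
          unfolding e_def by simp
        also have "\<dots> = x * ((\<Sum>k\<le>K. \<Sum>l\<le>k. \<Sum>j\<le>k-l. d l * p j * d (k-l-j))
            + (\<Sum>k\<le>K. \<Sum>l\<le>k. \<Sum>j\<le>k-l. d l * q (j+1) * p (k-l-j))
            + (\<Sum>k\<le>K. \<Sum>l\<le>k. \<Sum>j\<le>k-l. p l * q (j+1) * d (k-l-j))
            + (\<Sum>k\<le>K. \<Sum>l\<le>k. \<Sum>j\<le>k-l. p l * r (j+2) * p (k-l-j)))"
          unfolding F_def by (simp add: sum.distrib distrib_left flip: sum_distrib_left)
        also have "\<dots> \<le> x * ((\<Sum>i\<le>K. d i) * (\<Sum>i\<le>K. p i) * (\<Sum>i\<le>K. d i)
            + (\<Sum>i\<le>K. d i) * (\<Sum>i\<le>K. q (i+1)) * (\<Sum>i\<le>K. p i)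
            + (\<Sum>i\<le>K. p i) * (\<Sum>i\<le>K. q (i+1)) * (\<Sum>i\<le>K. d i)
            + (\<Sum>i\<le>K. p i) * (\<Sum>i\<le>K. r (i+2)) * (\<Sum>i\<le>K. p i))"
        proof -
          have c1: "(\<Sum>k\<le>K. \<Sum>l\<le>k. \<Sum>j\<le>k-l. d l * p j * d (k-l-j)) \<le> (\<Sum>i\<le>K. d i) * (\<Sum>i\<le>K. p i) * (\<Sum>i\<le>K. d i)"
            by (rule conv3_le) (auto intro: p0 d0)
          have c2: "(\<Sum>k\<le>K. \<Sum>l\<le>k. \<Sum>j\<le>k-l. d l * q (j+1) * p (k-l-j)) \<le> (\<Sum>i\<le>K. d i) * (\<Sum>i\<le>K. q (i+1)) * (\<Sum>i\<le>K. p i)"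
            by (rule conv3_le) (auto intro: p0 d0 q0)
          have c3: "(\<Sum>k\<le>K. \<Sum>l\<le>k. \<Sum>j\<le>k-l. p l * q (j+1) * d (k-l-j)) \<le> (\<Sum>i\<le>K. p i) * (\<Sum>i\<le>K. q (i+1)) * (\<Sum>i\<le>K. d i)"
            by (rule conv3_le) (auto intro: p0 d0 q0)
          have c4: "(\<Sum>k\<le>K. \<Sum>l\<le>k. \<Sum>j\<le>k-l. p l * r (j+2) * p (k-l-j)) \<le> (\<Sum>i\<le>K. p i) * (\<Sum>i\<le>K. r (i+2)) * (\<Sum>i\<le>K. p i)"
            by (rule conv3_le) (auto intro: p0 r0)
          show ?thesis using c1 c2 c3 c4 x0 by (intro mult_left_mono add_mono) auto
        qed
        also have "(\<Sum>i\<le>K. d i) = x * SA K + SG (K+1)"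
          unfolding d_def SA_def sum.distrib SGs[symmetric] by (simp add: sum_distrib_left)
        also have "(\<Sum>i\<le>K. p i) = SA K" unfolding SA_def ..
        also have "(\<Sum>i\<le>K. q (i+1)) = SG (K+1)" by (rule SGs)
        also have "(\<Sum>i\<le>K. r (i+2)) = SX (K+2)" by (rule SXs)
        also have "x * ((x * SA K + SG (K+1)) * SA K * (x * SA K + SG (K+1))
            + (x * SA K + SG (K+1)) * SG (K+1) * SA K
            + SA K * SG (K+1) * (x * SA K + SG (K+1))
            + SA K * SX (K+2) * SA K) \<le> x * ((x*a+g)*a*(x*a+g) + (x*a+g)*g*a + a*g*(x*a+g) + a*X*a)"
        proof -
          have h1: "SA K \<le> a" "SG (K+1) \<le> g" "SX (K+2) \<le> X"
            using less[of K] less[of "K+1"] less[of "K+2"] Suc K by auto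
          have h2: "x * SA K + SG (K+1) \<le> x*a + g" using h1 x0 by (intro add_mono mult_left_mono) auto
          have h3: "0 \<le> x * SA K + SG (K+1)" using x0 SA0[of K] SG0[of "K+1"] by simp
          show ?thesis using h1 h2 h3 x0 SA0[of K] SG0[of "K+1"] SX0[of "K+2"]
            by (intro mult_left_mono add_mono mult_mono) (auto intro: mult_nonneg_nonneg)
        qed
        finally show ?thesis .
      qed
      finally have "SA N \<le> p 0 + x * SA M + SG (Suc M) + x * ((x*a+g)*a*(x*a+g) + (x*a+g)*g*a + a*g*(x*a+g) + a*X*a)"
        by simp
      also have "\<dots> \<le> 1 + x * a + g + x * ((x*a+g)*a*(x*a+g) + (x*a+g)*g*a + a*g*(x*a+g) + a*X*a)"
      proof -
        have "p 0 \<le> 1" unfolding p_def using hA0 by simp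
        moreover have "x * SA M \<le> x * a" using less[of M] Suc x0 by (intro mult_left_mono) auto
        moreover have "SG (Suc M) \<le> g" using bG Suc by simp
        ultimately show ?thesis by linarith
      qed
      also have "\<dots> \<le> a" unfolding x_def a_def g_def X_def by simp
      finally show ?thesis .
    qed
    show ?case using bA bG bX by blast
  qed
  have "real (cA n) * x^n \<le> a"
    using key[of n] unfolding SA_def
    using member_le_sum[of n "{..n}" p] p0 unfolding p_def by auto
  then have "real (cA n) * x^n * (5610718614/1000000000)^n \<le> a * (5610718614/1000000000)^n"
    by (intro mult_right_mono) auto
  moreover have "x^n * (5610718614/1000000000)^n = 1"
    unfolding x_def by (simp flip: power_mult_distrib)
  ultimately have "real (cA n) * (x^n * (5610718614/1000000000)^n) \<le> a * (5610718614/1000000000)^n"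
    by (simp only: mult.assoc)
  then have "real (cA n) \<le> a * (5610718614/1000000000)^n"
    unfolding \<open>x^n * (5610718614/1000000000)^n = 1\<close> by simp
  then show ?thesis unfolding a_def .

qed


definition deg :: "'a set set \<Rightarrow> 'a \<Rightarrow> nat" where
  "deg F v = card {e\<in>F. v \<in> e}"

definition acyc :: "'a set set \<Rightarrow> bool" where
  "acyc F \<longleftrightarrow> (\<forall>F'\<subseteq>F. (\<forall>v. deg F' v \<noteq> 1) \<longrightarrow> F' = {})"

definition tjoin :: "'a set set \<Rightarrow> 'a \<Rightarrow> 'a \<Rightarrow> bool" where
  "tjoin F a b \<longleftrightarrow> (\<exists>F'\<subseteq>F. deg F' a = 1 \<and> deg F' b = 1 \<and> (\<forall>v. v \<noteq> a \<longrightarrow> v \<noteq> b \<longrightarrow> deg F' v \<noteq> 1))"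

definition ok :: "nat set \<Rightarrow> nat set set \<Rightarrow> bool" where
  "ok V F \<longleftrightarrow> (\<forall>e\<in>F. \<exists>a b. a \<in> V \<and> b \<in> V \<and> a < b \<and> e = {a,b})
     \<and> (\<forall>a b c d. a < b \<longrightarrow> b < c \<longrightarrow> c < d \<longrightarrow> {a,c} \<in> F \<longrightarrow> {b,d} \<in> F \<longrightarrow> False)
     \<and> (\<forall>v. deg F v \<le> 2) \<and> acyc F"

definition res :: "'a set set \<Rightarrow> 'a set \<Rightarrow> 'a set set" where
  "res F W = {e\<in>F. e \<subseteq> W}"

definition clA :: "nat set \<Rightarrow> nat set set set" where "clA V = {F. ok V F}"
definition clG :: "nat set \<Rightarrow> nat set set set" where "clG V = {F. ok V F \<and> deg F (Min V) = 1}"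
definition clGm :: "nat set \<Rightarrow> nat set set set" where "clGm V = {F. ok V F \<and> deg F (Max V) = 1}"
definition clX :: "nat set \<Rightarrow> nat set set set" where
  "clX V = {F. ok V F \<and> deg F (Min V) = 1 \<and> deg F (Max V) = 1 \<and> \<not> tjoin F (Min V) (Max V)}"

definition cA where "cA n = card (clA {..<n})"
definition cG where "cG n = card (clG {..<n})"
definition cX where "cX n = card (clX {..<n})"

lemma deg_union: "finite F \<Longrightarrow> finite G \<Longrightarrow> F \<inter> G = {} \<Longrightarrow> deg (F \<union> G) v = deg F v + deg G v"
proof -
  assume a: "finite F" "finite G" "F \<inter> G = {}"
  have "{e\<in>F \<union> G. v \<in> e} = {e\<in>F. v \<in> e} \<union> {e\<in>G. v \<in> e}" by blast
  moreover have "card ({e\<in>F. v \<in> e} \<union> {e\<in>G. v \<in> e}) = card {e\<in>F. v \<in> e} + card {e\<in>G. v \<in> e}"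
    by (rule card_Un_disjoint) (use a in auto)
  ultimately show ?thesis unfolding deg_def by simp
qed

lemma deg_insert: "finite F \<Longrightarrow> e \<notin> F \<Longrightarrow> deg (insert e F) v = deg F v + (if v \<in> e then 1 else 0)"
proof -
  assume "finite F" "e \<notin> F"
  show ?thesis
  proof (cases "v \<in> e")
    case True
    then have "{x\<in>insert e F. v \<in> x} = insert e {x\<in>F. v \<in> x}" by auto
    then show ?thesis unfolding deg_def using True \<open>finite F\<close> \<open>e \<notin> F\<close> by simp
  next
    case False
    then have "{x\<in>insert e F. v \<in> x} = {x\<in>F. v \<in> x}" by auto
    then show ?thesis unfolding deg_def using False by simp
  qed
qed

lemma deg_mono: "finite F \<Longrightarrow> G \<subseteq> F \<Longrightarrow> deg G v \<le> deg F v"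
  unfolding deg_def by (rule card_mono) auto

lemma deg_res_out: "v \<notin> W \<Longrightarrow> deg (res F W) v = 0"
proof -
  assume "v \<notin> W"
  then have "{e\<in>res F W. v \<in> e} = {}" unfolding res_def by blast
  then show ?thesis unfolding deg_def by (simp only: card.empty)
qed

lemma deg_res_in: "(\<And>e. e \<in> F \<Longrightarrow> v \<in> e \<Longrightarrow> e \<subseteq> W) \<Longrightarrow> deg (res F W) v = deg F v"
proof -
  assume "\<And>e. e \<in> F \<Longrightarrow> v \<in> e \<Longrightarrow> e \<subseteq> W"
  then have "{e\<in>res F W. v \<in> e} = {e\<in>F. v \<in> e}" unfolding res_def by blast
  then show ?thesis unfolding deg_def by simp
qed

lemma deg1_unique: "deg F v = 1 \<Longrightarrow> e \<in> F \<Longrightarrow> e' \<in> F \<Longrightarrow> v \<in> e \<Longrightarrow> v \<in> e' \<Longrightarrow> e = e'"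
proof -
  assume "deg F v = 1" "e \<in> F" "e' \<in> F" "v \<in> e" "v \<in> e'"
  from \<open>deg F v = 1\<close> have "card {e\<in>F. v \<in> e} = 1" unfolding deg_def .
  then obtain x where "{e\<in>F. v \<in> e} = {x}" by (rule card_1_singletonE)
  moreover have "e \<in> {e\<in>F. v \<in> e}" "e' \<in> {e\<in>F. v \<in> e}"
    using \<open>e \<in> F\<close> \<open>e' \<in> F\<close> \<open>v \<in> e\<close> \<open>v \<in> e'\<close> by simp_all
  ultimately show "e = e'" by simp
qed

lemma deg0: "finite F \<Longrightarrow> deg F v = 0 \<Longrightarrow> e \<in> F \<Longrightarrow> v \<notin> e"
  unfolding deg_def by auto

lemma deg_pos: "finite F \<Longrightarrow> e \<in> F \<Longrightarrow> v \<in> e \<Longrightarrow> 0 < deg F v"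
  unfolding deg_def by (subst card_gt_0_iff) auto

lemma deg_single: "deg {e} v = (if v \<in> e then 1 else 0)"
proof (cases "v \<in> e")
  case True
  then have "{x\<in>{e}. v \<in> x} = {e}" by blast
  then show ?thesis unfolding deg_def using True by simp
next
  case False
  then have "{x\<in>{e}. v \<in> x} = {}" by blast
  then show ?thesis unfolding deg_def using False by simp
qed

lemma deg_empty[simp]: "deg {} v = 0"
  unfolding deg_def by auto

lemma okE: assumes "ok V F"
  shows "\<And>e. e \<in> F \<Longrightarrow> \<exists>a b. a \<in> V \<and> b \<in> V \<and> a < b \<and> e = {a,b}"
    and "\<And>a b c d. a < b \<Longrightarrow> b < c \<Longrightarrow> c < d \<Longrightarrow> {a,c} \<in> F \<Longrightarrow> {b,d} \<in> F \<Longrightarrow> False"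
    and "\<And>v. deg F v \<le> 2" and "acyc F"
  using assms unfolding ok_def by blast+

lemma okI: assumes "\<And>e. e \<in> F \<Longrightarrow> \<exists>a b. a \<in> V \<and> b \<in> V \<and> a < b \<and> e = {a,b}"
    and "\<And>a b c d. a < b \<Longrightarrow> b < c \<Longrightarrow> c < d \<Longrightarrow> {a,c} \<in> F \<Longrightarrow> {b,d} \<in> F \<Longrightarrow> False"
    and "\<And>v. deg F v \<le> 2" and "acyc F"
  shows "ok V F"
  using assms unfolding ok_def by blast

lemma ok_edge_sub: "ok V F \<Longrightarrow> e \<in> F \<Longrightarrow> e \<subseteq> V"
  using okE(1) by blast

lemma ok_Pow: "ok V F \<Longrightarrow> F \<subseteq> Pow V"
  using ok_edge_sub by blast

lemma cl_finite: "finite V \<Longrightarrow> finite (clA V)" "finite V \<Longrightarrow> finite (clG V)"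
  "finite V \<Longrightarrow> finite (clGm V)" "finite V \<Longrightarrow> finite (clX V)"
proof -
  assume "finite V"
  then have "finite (Pow (Pow V))" by simp
  moreover have "clA V \<subseteq> Pow (Pow V)" unfolding clA_def using ok_Pow by blast
  ultimately have f: "finite (clA V)" by (rule finite_subset[rotated])
  show "finite (clA V)" by (rule f)
  show "finite (clG V)" by (rule finite_subset[OF _ f]) (auto simp: clG_def clA_def)
  show "finite (clGm V)" by (rule finite_subset[OF _ f]) (auto simp: clGm_def clA_def)
  show "finite (clX V)" by (rule finite_subset[OF _ f]) (auto simp: clX_def clA_def)
qed

lemma ok_finite: "finite V \<Longrightarrow> ok V F \<Longrightarrow> finite F"
  using ok_Pow by (meson finite_Pow_iff finite_subset)

lemma acyc_mono: "acyc F \<Longrightarrow> G \<subseteq> F \<Longrightarrow> acyc G"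
  unfolding acyc_def by (meson order_trans)

lemma ok_sub: "ok V F \<Longrightarrow> G \<subseteq> F \<Longrightarrow> (\<And>e. e \<in> G \<Longrightarrow> e \<subseteq> W) \<Longrightarrow> finite F \<Longrightarrow> ok W G"
proof -
  assume h: "ok V F" "G \<subseteq> F" "\<And>e. e \<in> G \<Longrightarrow> e \<subseteq> W" "finite F"
  show ?thesis
  proof (rule okI)
    fix e assume "e \<in> G"
    then obtain a b where "a < b" "e = {a,b}" using h(2) okE(1)[OF h(1)] by blast
    then show "\<exists>a b. a \<in> W \<and> b \<in> W \<and> a < b \<and> e = {a,b}" using h(3)[OF \<open>e\<in>G\<close>] by blast
  next
    fix a b c d :: nat assume "a < b" "b < c" "c < d" "{a,c} \<in> G" "{b,d} \<in> G"
    then show False using okE(2)[OF h(1)] h(2) by blast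
  next
    fix v show "deg G v \<le> 2" using okE(3)[OF h(1), of v] deg_mono[OF h(4) h(2), of v] by linarith
  next
    show "acyc G" using okE(4)[OF h(1)] h(2) by (rule acyc_mono)
  qed
qed

lemma ok_res: "ok V F \<Longrightarrow> finite F \<Longrightarrow> ok W (res F W)"
  by (rule ok_sub[of V F]) (auto simp: res_def)


definition imgE :: "('a \<Rightarrow> 'b) \<Rightarrow> 'a set set \<Rightarrow> 'b set set" where
  "imgE \<phi> F = (\<lambda>e. \<phi> ` e) ` F"

lemma inj_imgE: "inj_on \<phi> V \<Longrightarrow> inj_on (imgE \<phi>) (Pow (Pow V))"
proof -
  assume "inj_on \<phi> V"
  then have i1: "inj_on (image \<phi>) (Pow V)" by (rule inj_on_image_Pow)
  then have "inj_on (image (image \<phi>)) (Pow (Pow V))" by (rule inj_on_image_Pow)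
  then show ?thesis unfolding imgE_def .
qed

lemma card_imgE: "inj_on \<phi> V \<Longrightarrow> F \<subseteq> Pow V \<Longrightarrow> card (imgE \<phi> F) = card F"
proof -
  assume "inj_on \<phi> V" "F \<subseteq> Pow V"
  then have "inj_on (image \<phi>) F" using inj_on_image_Pow inj_on_subset by blast
  then show ?thesis unfolding imgE_def by (rule card_image)
qed

lemma imgE_sub: "G \<subseteq> F \<Longrightarrow> imgE \<phi> G \<subseteq> imgE \<phi> F"
  unfolding imgE_def by blast

lemma deg_img: assumes "inj_on \<phi> V" "F \<subseteq> Pow V" "v \<in> V"
  shows "deg (imgE \<phi> F) (\<phi> v) = deg F v"
proof -
  have "{e'\<in>imgE \<phi> F. \<phi> v \<in> e'} = imgE \<phi> {e\<in>F. v \<in> e}"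
  proof
    show "{e'\<in>imgE \<phi> F. \<phi> v \<in> e'} \<subseteq> imgE \<phi> {e\<in>F. v \<in> e}"
    proof
      fix e' assume "e' \<in> {e'\<in>imgE \<phi> F. \<phi> v \<in> e'}"
      then obtain e where e: "e \<in> F" "e' = \<phi> ` e" "\<phi> v \<in> \<phi> ` e" unfolding imgE_def by blast
      then obtain u where "u \<in> e" "\<phi> v = \<phi> u" by blast
      moreover have "e \<subseteq> V" using e assms(2) by blast
      ultimately have "v \<in> e" using assms(1,3) by (metis inj_onD subsetD)
      then show "e' \<in> imgE \<phi> {e\<in>F. v \<in> e}" using e unfolding imgE_def by blast
    qed
    show "imgE \<phi> {e\<in>F. v \<in> e} \<subseteq> {e'\<in>imgE \<phi> F. \<phi> v \<in> e'}" unfolding imgE_def by blast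
  qed
  then have "deg (imgE \<phi> F) (\<phi> v) = card (imgE \<phi> {e\<in>F. v \<in> e})" unfolding deg_def by simp
  also have "\<dots> = deg F v" unfolding deg_def using assms by (intro card_imgE) auto
  finally show ?thesis .
qed

lemma deg_img_out: assumes "F \<subseteq> Pow V" "w \<notin> \<phi> ` V"
  shows "deg (imgE \<phi> F) w = 0"
proof -
  have "{e'\<in>imgE \<phi> F. w \<in> e'} = {}" using assms unfolding imgE_def by blast
  then show ?thesis unfolding deg_def by (simp only: card.empty)
qed

lemma deg_out: assumes "F \<subseteq> Pow V" "w \<notin> V" shows "deg F w = 0"
proof -
  have "{e\<in>F. w \<in> e} = {}" using assms by blast
  then show ?thesis unfolding deg_def by (simp only: card.empty)
qed

lemma preimg: assumes "F'' \<subseteq> imgE \<phi> F"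
  shows "imgE \<phi> {e\<in>F. \<phi> ` e \<in> F''} = F''"
  using assms unfolding imgE_def by blast

lemma acyc_img: assumes "inj_on \<phi> V" "F \<subseteq> Pow V" "acyc F"
  shows "acyc (imgE \<phi> F)"
  unfolding acyc_def
proof (intro allI impI)
  fix F'' assume h: "F'' \<subseteq> imgE \<phi> F" "\<forall>w. deg F'' w \<noteq> 1"
  define F' where "F' = {e\<in>F. \<phi> ` e \<in> F''}"
  have F'sub: "F' \<subseteq> F" unfolding F'_def by blast
  have F'P: "F' \<subseteq> Pow V" using F'sub assms(2) by blast
  have im: "imgE \<phi> F' = F''" unfolding F'_def by (rule preimg[OF h(1)])
  have "deg F' v \<noteq> 1" for v
  proof (cases "v \<in> V")
    case True
    then have "deg F' v = deg F'' (\<phi> v)" using deg_img[OF assms(1) F'P True] im by simp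
    then show ?thesis using h(2) by simp
  next
    case False
    then show ?thesis using deg_out[OF F'P False] by simp
  qed
  then have "F' = {}" using assms(3) F'sub unfolding acyc_def by blast
  then show "F'' = {}" using im unfolding imgE_def by simp
qed

lemma tjoin_img: assumes "inj_on \<phi> V" "F \<subseteq> Pow V" "a \<in> V" "b \<in> V" "tjoin (imgE \<phi> F) (\<phi> a) (\<phi> b)"
  shows "tjoin F a b"
proof -
  obtain F'' where h: "F'' \<subseteq> imgE \<phi> F" "deg F'' (\<phi> a) = 1" "deg F'' (\<phi> b) = 1"
    "\<forall>w. w \<noteq> \<phi> a \<longrightarrow> w \<noteq> \<phi> b \<longrightarrow> deg F'' w \<noteq> 1"
    using assms(5) unfolding tjoin_def by blast
  define F' where "F' = {e\<in>F. \<phi> ` e \<in> F''}"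
  have F'sub: "F' \<subseteq> F" unfolding F'_def by blast
  have F'P: "F' \<subseteq> Pow V" using F'sub assms(2) by blast
  have im: "imgE \<phi> F' = F''" unfolding F'_def by (rule preimg[OF h(1)])
  have da: "deg F' a = 1" using deg_img[OF assms(1) F'P assms(3)] im h(2) by simp
  have db: "deg F' b = 1" using deg_img[OF assms(1) F'P assms(4)] im h(3) by simp
  have "deg F' v \<noteq> 1" if "v \<noteq> a" "v \<noteq> b" for v
  proof (cases "v \<in> V")
    case True
    then have "\<phi> v \<noteq> \<phi> a" "\<phi> v \<noteq> \<phi> b" using that assms(1,3,4) by (metis inj_onD)+
    moreover have "deg F' v = deg F'' (\<phi> v)" using deg_img[OF assms(1) F'P True] im by simp
    ultimately show ?thesis using h(4) by simp
  next
    case False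
    then show ?thesis using deg_out[OF F'P False] by simp
  qed
  then show ?thesis unfolding tjoin_def using F'sub da db by blast
qed

lemma pair_ord_eq: "(x::nat) < y \<Longrightarrow> u < v \<Longrightarrow> {x,y} = {u,v} \<Longrightarrow> x = u \<and> y = v"
  by (metis doubleton_eq_iff less_asym)

lemma mono_refl: "\<forall>a\<in>V. \<forall>b\<in>V. a < b \<longrightarrow> \<phi> a < (\<phi> b::nat) \<Longrightarrow> x \<in> V \<Longrightarrow> y \<in> V \<Longrightarrow> \<phi> x < \<phi> y \<Longrightarrow> (x::nat) < y"
  by (metis less_asym linorder_neqE_nat)

lemma anti_refl: "\<forall>a\<in>V. \<forall>b\<in>V. a < b \<longrightarrow> \<phi> b < (\<phi> a::nat) \<Longrightarrow> x \<in> V \<Longrightarrow> y \<in> V \<Longrightarrow> \<phi> x < \<phi> y \<Longrightarrow> (y::nat) < x"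
  by (metis less_asym linorder_neqE_nat)

definition monoanti :: "(nat \<Rightarrow> nat) \<Rightarrow> nat set \<Rightarrow> bool" where
  "monoanti \<phi> V \<longleftrightarrow> (\<forall>a\<in>V. \<forall>b\<in>V. a < b \<longrightarrow> \<phi> a < \<phi> b) \<or> (\<forall>a\<in>V. \<forall>b\<in>V. a < b \<longrightarrow> \<phi> b < \<phi> a)"

lemma monoanti_inj: "monoanti \<phi> V \<Longrightarrow> inj_on \<phi> V"
  unfolding monoanti_def inj_on_def by (metis less_irrefl linorder_neqE_nat)

lemma ok_img: assumes "ok V F" "monoanti \<phi> V"
  shows "ok (\<phi> ` V) (imgE \<phi> F)"
proof -
  have inj: "inj_on \<phi> V" by (rule monoanti_inj[OF assms(2)])
  have FP: "F \<subseteq> Pow V" by (rule ok_Pow[OF assms(1)])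
  have edge: "\<exists>a1 c1. a1 \<in> V \<and> c1 \<in> V \<and> a1 < c1 \<and> e = {a1,c1} \<and> \<phi> ` e = {\<phi> a1, \<phi> c1}" if "e \<in> F" for e
    using okE(1)[OF assms(1) that] by auto
  show ?thesis
  proof (rule okI)
    fix e' assume "e' \<in> imgE \<phi> F"
    then obtain e where "e \<in> F" "e' = \<phi> ` e" unfolding imgE_def by blast
    then obtain a1 c1 where ac: "a1 \<in> V" "c1 \<in> V" "a1 < c1" "e' = {\<phi> a1, \<phi> c1}" using edge by blast
    have "\<phi> a1 \<noteq> \<phi> c1" using inj ac by (metis inj_onD less_irrefl)
    then show "\<exists>a b. a \<in> \<phi> ` V \<and> b \<in> \<phi> ` V \<and> a < b \<and> e' = {a,b}"
    proof (cases "\<phi> a1 < \<phi> c1")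
      case True
      then show ?thesis using ac by blast
    next
      case False
      then have "\<phi> c1 < \<phi> a1" using \<open>\<phi> a1 \<noteq> \<phi> c1\<close> by linarith
      moreover have "e' = {\<phi> c1, \<phi> a1}" using ac by (simp add: insert_commute)
      ultimately show ?thesis using ac by blast
    qed
  next
    fix a b c d :: nat assume o: "a < b" "b < c" "c < d" "{a,c} \<in> imgE \<phi> F" "{b,d} \<in> imgE \<phi> F"
    obtain e1 where "e1 \<in> F" "{a,c} = \<phi> ` e1" using o(4) unfolding imgE_def by blast
    then obtain a1 c1 where e1: "a1 \<in> V" "c1 \<in> V" "a1 < c1" "e1 = {a1,c1}" "{a,c} = {\<phi> a1, \<phi> c1}" "{a1,c1} \<in> F"
      using edge by metis
    obtain e2 where "e2 \<in> F" "{b,d} = \<phi> ` e2" using o(5) unfolding imgE_def by blast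
    then obtain b1 d1 where e2: "b1 \<in> V" "d1 \<in> V" "b1 < d1" "e2 = {b1,d1}" "{b,d} = {\<phi> b1, \<phi> d1}" "{b1,d1} \<in> F"
      using edge by metis
    note nonint = okE(2)[OF assms(1)]
    from assms(2) show False unfolding monoanti_def
    proof
      assume m: "\<forall>a\<in>V. \<forall>b\<in>V. a < b \<longrightarrow> \<phi> a < \<phi> b"
      have p1: "\<phi> a1 < \<phi> c1" "\<phi> b1 < \<phi> d1" using m e1 e2 by auto
      have "a < c" "b < d" using o(1-3) by simp_all
      have q1: "a = \<phi> a1 \<and> c = \<phi> c1" by (rule pair_ord_eq[OF \<open>a < c\<close> p1(1) e1(5)])
      have q2: "b = \<phi> b1 \<and> d = \<phi> d1" by (rule pair_ord_eq[OF \<open>b < d\<close> p1(2) e2(5)])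
      have "a1 < b1" using mono_refl[OF m e1(1) e2(1)] q1 q2 o(1) by simp
      moreover have "b1 < c1" using mono_refl[OF m e2(1) e1(2)] q1 q2 o(2) by simp
      moreover have "c1 < d1" using mono_refl[OF m e1(2) e2(2)] q1 q2 o(3) by simp
      ultimately show False using nonint e1(6) e2(6) by blast
    next
      assume m: "\<forall>a\<in>V. \<forall>b\<in>V. a < b \<longrightarrow> \<phi> b < \<phi> a"
      have p1: "\<phi> c1 < \<phi> a1" "\<phi> d1 < \<phi> b1" using m e1 e2 by auto
      have "a < c" "b < d" using o(1-3) by simp_all
      have r1: "{a,c} = {\<phi> c1, \<phi> a1}" "{b,d} = {\<phi> d1, \<phi> b1}" using e1(5) e2(5) by (simp_all add: insert_commute)
      have q1: "a = \<phi> c1 \<and> c = \<phi> a1" by (rule pair_ord_eq[OF \<open>a < c\<close> p1(1) r1(1)])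
      have q2: "b = \<phi> d1 \<and> d = \<phi> b1" by (rule pair_ord_eq[OF \<open>b < d\<close> p1(2) r1(2)])
      have "d1 < c1" using anti_refl[OF m e1(2) e2(2)] q1 q2 o(1) by simp
      moreover have "a1 < d1" using anti_refl[OF m e2(2) e1(1)] q1 q2 o(2) by simp
      moreover have "b1 < a1" using anti_refl[OF m e1(1) e2(1)] q1 q2 o(3) by simp
      ultimately show False using nonint[of b1 a1 d1 c1] e1(6) e2(6) by (simp add: insert_commute)
    qed
  next
    fix w show "deg (imgE \<phi> F) w \<le> 2"
    proof (cases "w \<in> \<phi> ` V")
      case True
      then obtain v where "v \<in> V" "w = \<phi> v" by blast
      then show ?thesis using deg_img[OF inj FP] okE(3)[OF assms(1)] by simp
    next
      case False
      then show ?thesis using deg_img_out[OF FP False] by simp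
    qed
  next
    show "acyc (imgE \<phi> F)" by (rule acyc_img[OF inj FP okE(4)[OF assms(1)]])
  qed
qed


definition ix :: "nat set \<Rightarrow> nat \<Rightarrow> nat" where "ix W v = card {u\<in>W. u < v}"
definition ixr :: "nat set \<Rightarrow> nat \<Rightarrow> nat" where "ixr W v = card {u\<in>W. v < u}"

lemma ix_mono: "finite W \<Longrightarrow> a \<in> W \<Longrightarrow> b \<in> W \<Longrightarrow> a < b \<Longrightarrow> ix W a < ix W b"
  unfolding ix_def by (rule psubset_card_mono) auto

lemma ixr_anti: "finite W \<Longrightarrow> a \<in> W \<Longrightarrow> b \<in> W \<Longrightarrow> a < b \<Longrightarrow> ixr W b < ixr W a"
  unfolding ixr_def by (rule psubset_card_mono) auto

lemma ix_lt: "finite W \<Longrightarrow> v \<in> W \<Longrightarrow> ix W v < card W"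
  unfolding ix_def by (rule psubset_card_mono) auto

lemma ixr_lt: "finite W \<Longrightarrow> v \<in> W \<Longrightarrow> ixr W v < card W"
  unfolding ixr_def by (rule psubset_card_mono) auto

lemma ix_monoanti: "finite W \<Longrightarrow> monoanti (ix W) W"
  unfolding monoanti_def using ix_mono by blast

lemma ixr_monoanti: "finite W \<Longrightarrow> monoanti (ixr W) W"
  unfolding monoanti_def using ixr_anti by blast

lemma img_full: assumes "finite W" "monoanti \<phi> W" "\<And>v. v \<in> W \<Longrightarrow> \<phi> v < card W"
  shows "\<phi> ` W = {..<card W}"
proof -
  have "\<phi> ` W \<subseteq> {..<card W}" using assms(3) by blast
  moreover have "card (\<phi> ` W) = card {..<card W}"
    using card_image[OF monoanti_inj[OF assms(2)]] by simp
  ultimately show ?thesis by (intro card_subset_eq) auto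
qed

lemma ix_img: "finite W \<Longrightarrow> ix W ` W = {..<card W}"
  by (rule img_full) (auto intro: ix_monoanti ix_lt)

lemma ixr_img: "finite W \<Longrightarrow> ixr W ` W = {..<card W}"
  by (rule img_full) (auto intro: ixr_monoanti ixr_lt)

lemma ix_Min: "finite W \<Longrightarrow> W \<noteq> {} \<Longrightarrow> ix W (Min W) = 0"
  unfolding ix_def by (auto simp: card_eq_0_iff)

lemma ixr_Max: "finite W \<Longrightarrow> W \<noteq> {} \<Longrightarrow> ixr W (Max W) = 0"
  unfolding ixr_def by (auto simp: card_eq_0_iff)

lemma ix_Max: assumes "finite W" "W \<noteq> {}" shows "ix W (Max W) = card W - 1"
proof -
  have "{u\<in>W. u < Max W} = W - {Max W}" using assms by (auto simp: order.not_eq_order_implies_strict)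
  then show ?thesis unfolding ix_def using assms by simp
qed

lemma Min_lt: "0 < n \<Longrightarrow> Min {..<n} = (0::nat)"
  by (rule Min_eqI) auto

lemma Max_lt: "0 < n \<Longrightarrow> Max {..<n} = n - (1::nat)"
  by (rule Max_eqI) auto

lemma ok_empty: "ok {} F \<Longrightarrow> F = {}"
  using okE(1) by blast

lemma card_transport:
  assumes "finite W" "monoanti \<phi> W" "\<phi> ` W = U"
    and "\<And>F. ok W F \<Longrightarrow> P F \<Longrightarrow> Q (imgE \<phi> F)"
  shows "card {F. ok W F \<and> P F} \<le> card {F. ok U F \<and> Q F}"
proof (rule card_inj_on_le)
  show "inj_on (imgE \<phi>) {F. ok W F \<and> P F}"
    apply (rule inj_on_subset[OF inj_imgE[OF monoanti_inj[OF assms(2)]]])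
    using ok_Pow by blast
  show "imgE \<phi> ` {F. ok W F \<and> P F} \<subseteq> {F. ok U F \<and> Q F}"
    using ok_img[OF _ assms(2)] assms(3,4) by blast
  have "finite U" using assms(1,3) by blast
  have "{F. ok U F \<and> Q F} \<subseteq> clA U" unfolding clA_def by blast
  then show "finite {F. ok U F \<and> Q F}" using cl_finite(1)[OF \<open>finite U\<close>] by (rule finite_subset)
qed

lemma inv_A: "finite W \<Longrightarrow> card (clA W) \<le> cA (card W)"
  unfolding clA_def cA_def using card_transport[of W "ix W" "{..<card W}" "\<lambda>_. True" "\<lambda>_. True"]
    ix_monoanti ix_img by simp

lemma inv_G: assumes "finite W" shows "card (clG W) \<le> cG (card W)"
proof (cases "W = {}")
  case True
  have "clG W = {}"
  proof -
    have "F \<notin> clG W" for F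
    proof
      assume "F \<in> clG W"
      then have "ok {} F" "deg F (Min W) = 1 \<or> deg F (Max W) = 1" using True unfolding clG_def by auto
      then show False using ok_empty by force
    qed
    then show ?thesis by blast
  qed
  then show ?thesis by simp
next
  case False
  have FP: "ok W F \<Longrightarrow> F \<subseteq> Pow W" for F by (rule ok_Pow)
  have "card {F. ok W F \<and> deg F (Min W) = 1} \<le> card {F. ok {..<card W} F \<and> deg F (Min {..<card W}) = 1}"
  proof (rule card_transport[OF assms ix_monoanti[OF assms] ix_img[OF assms]])
    fix F assume "ok W F" "deg F (Min W) = 1"
    moreover have "Min W \<in> W" using assms False by simp
    moreover have "Min {..<card W} = ix W (Min W)" using ix_Min[OF assms False] Min_lt[of "card W"] assms False by (simp add: card_gt_0_iff)
    ultimately show "deg (imgE (ix W) F) (Min {..<card W}) = 1"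
      using deg_img[OF monoanti_inj[OF ix_monoanti[OF assms]] FP] by simp
  qed
  then show ?thesis unfolding clG_def cG_def by simp
qed

lemma inv_Gm: assumes "finite W" shows "card (clGm W) \<le> cG (card W)"
proof (cases "W = {}")
  case True
  have "clGm W = {}"
  proof -
    have "F \<notin> clGm W" for F
    proof
      assume "F \<in> clGm W"
      then have "ok {} F" "deg F (Min W) = 1 \<or> deg F (Max W) = 1" using True unfolding clGm_def by auto
      then show False using ok_empty by force
    qed
    then show ?thesis by blast
  qed
  then show ?thesis by simp
next
  case False
  have FP: "ok W F \<Longrightarrow> F \<subseteq> Pow W" for F by (rule ok_Pow)
  have "card {F. ok W F \<and> deg F (Max W) = 1} \<le> card {F. ok {..<card W} F \<and> deg F (Min {..<card W}) = 1}"
  proof (rule card_transport[OF assms ixr_monoanti[OF assms] ixr_img[OF assms]])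
    fix F assume "ok W F" "deg F (Max W) = 1"
    moreover have "Max W \<in> W" using assms False by simp
    moreover have "Min {..<card W} = ixr W (Max W)" using ixr_Max[OF assms False] Min_lt[of "card W"] assms False by (simp add: card_gt_0_iff)
    ultimately show "deg (imgE (ixr W) F) (Min {..<card W}) = 1"
      using deg_img[OF monoanti_inj[OF ixr_monoanti[OF assms]] FP] by simp
  qed
  then show ?thesis unfolding clGm_def cG_def clG_def by simp
qed

lemma inv_X: assumes "finite W" shows "card (clX W) \<le> cX (card W)"
proof (cases "W = {}")
  case True
  have "clX W = {}"
  proof -
    have "F \<notin> clX W" for F
    proof
      assume "F \<in> clX W"
      then have "ok {} F" "deg F (Min W) = 1 \<or> deg F (Max W) = 1" using True unfolding clX_def by auto
      then show False using ok_empty by force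
    qed
    then show ?thesis by blast
  qed
  then show ?thesis by simp
next
  case False
  have FP: "ok W F \<Longrightarrow> F \<subseteq> Pow W" for F by (rule ok_Pow)
  have inj: "inj_on (ix W) W" by (rule monoanti_inj[OF ix_monoanti[OF assms]])
  have "card {F. ok W F \<and> (deg F (Min W) = 1 \<and> deg F (Max W) = 1 \<and> \<not> tjoin F (Min W) (Max W))}
     \<le> card {F. ok {..<card W} F \<and> (deg F (Min {..<card W}) = 1 \<and> deg F (Max {..<card W}) = 1
          \<and> \<not> tjoin F (Min {..<card W}) (Max {..<card W}))}"
  proof (rule card_transport[OF assms ix_monoanti[OF assms] ix_img[OF assms]])
    fix F assume h: "ok W F" "deg F (Min W) = 1 \<and> deg F (Max W) = 1 \<and> \<not> tjoin F (Min W) (Max W)"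
    have mm: "Min W \<in> W" "Max W \<in> W" using assms False by simp_all
    have e1: "Min {..<card W} = ix W (Min W)" using ix_Min[OF assms False] Min_lt[of "card W"] assms False by (simp add: card_gt_0_iff)
    have e2: "Max {..<card W} = ix W (Max W)" using ix_Max[OF assms False] Max_lt[of "card W"] assms False by (simp add: card_gt_0_iff)
    show "deg (imgE (ix W) F) (Min {..<card W}) = 1 \<and> deg (imgE (ix W) F) (Max {..<card W}) = 1
          \<and> \<not> tjoin (imgE (ix W) F) (Min {..<card W}) (Max {..<card W})"
      unfolding e1 e2 using deg_img[OF inj FP[OF h(1)]] mm h tjoin_img[OF inj FP[OF h(1)] mm] by auto
  qed
  then show ?thesis unfolding clX_def cX_def by simp
qed


lemma ok_del: "ok W F \<Longrightarrow> finite F \<Longrightarrow> deg F v = 0 \<Longrightarrow> ok (W - {v}) F"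
proof -
  assume h: "ok W F" "finite F" "deg F v = 0"
  show ?thesis
  proof (rule ok_sub[OF h(1) order_refl _ h(2)])
    fix e assume "e \<in> F"
    then show "e \<subseteq> W - {v}" using ok_edge_sub[OF h(1)] deg0[OF h(2,3)] by blast
  qed
qed

lemma edge0: assumes "ok V F" "e \<in> F" "(0::nat) \<in> e"
  shows "\<exists>m. 0 < m \<and> m \<in> V \<and> e = {0,m}"
proof -
  obtain a b where "a \<in> V" "b \<in> V" "a < b" "e = {a,b}" using okE(1)[OF assms(1,2)] by blast
  then show ?thesis using assms(3) by auto
qed

lemma deg_split3:
  assumes "finite P1" "finite P2" "finite P3" "P1 \<inter> P2 = {}" "P1 \<inter> P3 = {}" "P2 \<inter> P3 = {}"
  shows "deg (P1 \<union> P2 \<union> P3) v = deg P1 v + deg P2 v + deg P3 v"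
proof -
  have "deg (P1 \<union> P2 \<union> P3) v = deg (P1 \<union> P2) v + deg P3 v"
    by (rule deg_union) (use assms in auto)
  then show ?thesis using deg_union[OF assms(1,2,4)] by simp
qed

lemma split1:
  assumes ok: "ok {..<n} F" and m0: "{0,m} \<in> F" and d0: "deg F 0 = 1" and mn: "0 < m" "m < n"
  shows "F = insert {0,m} (res F {1..m} \<union> res F {m..<n})"
    and "deg F v = deg (res F {1..m}) v + deg (res F {m..<n}) v + (if v \<in> {0,m} then 1 else 0)"
proof -
  have fin: "finite F" using ok_finite[OF _ ok] by simp
  show eq: "F = insert {0,m} (res F {1..m} \<union> res F {m..<n})"
  proof
    show "insert {0,m} (res F {1..m} \<union> res F {m..<n}) \<subseteq> F" using m0 unfolding res_def by blast
    show "F \<subseteq> insert {0,m} (res F {1..m} \<union> res F {m..<n})"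
    proof
      fix e assume eF: "e \<in> F"
      obtain u w where uw: "u < w" "w < n" "e = {u,w}" using okE(1)[OF ok eF] by auto
      show "e \<in> insert {0,m} (res F {1..m} \<union> res F {m..<n})"
      proof (cases "e = {0,m}")
        case True then show ?thesis by simp
      next
        case False
        have "u \<noteq> 0"
        proof
          assume "u = 0"
          then have "e = {0,m}" using deg1_unique[OF d0 eF m0] uw by simp
          then show False using False by simp
        qed
        show ?thesis
        proof (cases "w \<le> m")
          case True
          then have "e \<subseteq> {1..m}" using uw \<open>u \<noteq> 0\<close> by auto
          then show ?thesis using eF unfolding res_def by blast
        next
          case False
          show ?thesis
          proof (cases "m \<le> u")
            case True
            then have "e \<subseteq> {m..<n}" using uw by auto
            then show ?thesis using eF unfolding res_def by blast
          next
            case False2: False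
            have "0 < u" "u < m" "m < w" using \<open>u \<noteq> 0\<close> False False2 by auto
            then have False using okE(2)[OF ok, of 0 u m w] m0 eF uw by blast
            then show ?thesis ..
          qed
        qed
      qed
    qed
  qed
  have f1: "finite (res F {1..m})" "finite (res F {m..<n})" using fin unfolding res_def by auto
  have disj: "res F {1..m} \<inter> res F {m..<n} = {}"
  proof (rule ccontr)
    assume "res F {1..m} \<inter> res F {m..<n} \<noteq> {}"
    then obtain e where e: "e \<in> F" "e \<subseteq> {1..m}" "e \<subseteq> {m..<n}" unfolding res_def by blast
    obtain u w where uw: "u < w" "e = {u,w}" using okE(1)[OF ok e(1)] by blast
    have "u \<in> {1..m}" "w \<in> {1..m}" "u \<in> {m..<n}" "w \<in> {m..<n}" using e(2,3) uw(2) by blast+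
    then have "u \<le> m" "m \<le> w" "w \<le> m" "m \<le> u" by simp_all
    then show False using uw(1) by linarith
  qed
  have notin: "{0,m} \<notin> res F {1..m} \<union> res F {m..<n}" using mn unfolding res_def by auto
  have "deg F v = deg (res F {1..m} \<union> res F {m..<n}) v + (if v \<in> {0,m} then 1 else 0)"
  proof -
    have "deg F v = deg (insert {0,m} (res F {1..m} \<union> res F {m..<n})) v" by (simp only: eq[symmetric])
    also have "\<dots> = deg (res F {1..m} \<union> res F {m..<n}) v + (if v \<in> {0,m} then 1 else 0)"
      by (rule deg_insert) (use f1 notin in simp_all)
    finally show ?thesis .
  qed
  then show "deg F v = deg (res F {1..m}) v + deg (res F {m..<n}) v + (if v \<in> {0,m} then 1 else 0)"
    using deg_union[OF f1 disj] by simp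
qed

definition nb :: "nat set set \<Rightarrow> nat" where "nb F = (SOME m. {0,m} \<in> F)"

lemma nb_prop: assumes "ok {..<n} F" "deg F 0 = 1"
  shows "{0, nb F} \<in> F" "0 < nb F" "nb F < n"
proof -
  have fin: "finite F" using ok_finite[OF _ assms(1)] by simp
  have "{e\<in>F. 0 \<in> e} \<noteq> {}" using assms(2) unfolding deg_def by (metis card.empty one_neq_zero)
  then obtain e where "e \<in> F" "0 \<in> e" by blast
  then obtain m where "0 < m" "m < n" "e = {0,m}" using edge0[OF assms(1)] by auto
  then have "\<exists>m. {0,m} \<in> F" using \<open>e \<in> F\<close> by blast
  then show nbF: "{0, nb F} \<in> F" unfolding nb_def by (rule someI_ex)
  obtain m' where "0 < m'" "m' < n" "{0, nb F} = {0,m'}" using edge0[OF assms(1) nbF] by auto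
  then show "0 < nb F" "nb F < n" by (metis doubleton_eq_iff less_numeral_extra(3))+
qed

lemma card_prod_le: "card A \<le> a \<Longrightarrow> card B \<le> b \<Longrightarrow> card (A \<times> B) \<le> a * b"
  by (simp add: card_cartesian_product mult_le_mono)

lemma card_Un_le2: "card A \<le> a \<Longrightarrow> card B \<le> b \<Longrightarrow> card (A \<union> B) \<le> a + b"
  using card_Un_le[of A B] by linarith

lemma decG: "card (clG {..<n}) \<le> (\<Sum>m\<in>{1..<n}. card (clGm {1..m}) * card (clA {m<..<n})
     + card (clA {1..<m}) * (card (clA {m<..<n}) + card (clG {m..<n})))"
proof -
  define T where "T m = clGm {1..m} \<times> clA {m<..<n} \<union> clA {1..<m} \<times> (clA {m<..<n} \<union> clG {m..<n})" for m
  define \<Phi> where "\<Phi> F = (nb F, (res F {1..nb F}, res F {nb F..<n}))" for F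
  have "card (clG {..<n}) \<le> card (Sigma {1..<n} T)"
  proof (rule card_inj_on_le)
    show "finite (Sigma {1..<n} T)" unfolding T_def by (intro finite_SigmaI) (simp_all add: cl_finite)
    have mem: "F \<in> clG {..<n} \<Longrightarrow> 0 < n \<and> ok {..<n} F \<and> deg F 0 = 1" for F
    proof -
      assume "F \<in> clG {..<n}"
      then have h: "ok {..<n} F" "deg F (Min {..<n}) = 1" unfolding clG_def by auto
      have "n \<noteq> 0" proof assume "n = 0" then have "F = {}" using h(1) ok_empty by simp
        then show False using h(2) by simp qed
      then show ?thesis using h Min_lt by simp
    qed
    show "inj_on \<Phi> (clG {..<n})"
    proof (rule inj_onI)
      fix F1 F2 assume "F1 \<in> clG {..<n}" "F2 \<in> clG {..<n}" "\<Phi> F1 = \<Phi> F2"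
      then have h1: "ok {..<n} F1" "deg F1 0 = 1" and h2: "ok {..<n} F2" "deg F2 0 = 1"
        and e: "nb F1 = nb F2" "res F1 {1..nb F1} = res F2 {1..nb F2}" "res F1 {nb F1..<n} = res F2 {nb F2..<n}"
        using mem unfolding \<Phi>_def by auto
      show "F1 = F2"
      proof -
        have A: "F1 = insert {0, nb F1} (res F1 {1..nb F1} \<union> res F1 {nb F1..<n})"
          by (rule split1(1)[OF h1(1) nb_prop(1)[OF h1] h1(2) nb_prop(2,3)[OF h1]])
        have B: "F2 = insert {0, nb F2} (res F2 {1..nb F2} \<union> res F2 {nb F2..<n})"
          by (rule split1(1)[OF h2(1) nb_prop(1)[OF h2] h2(2) nb_prop(2,3)[OF h2]])
        have "insert {0, nb F1} (res F1 {1..nb F1} \<union> res F1 {nb F1..<n}) = insert {0, nb F1} (res F2 {1..nb F2} \<union> res F2 {nb F2..<n})"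
          by (simp only: e(2) e(3))
        then show ?thesis using A B e(1) by simp
      qed
    qed
    show "\<Phi> ` clG {..<n} \<subseteq> Sigma {1..<n} T"
    proof
      fix y assume "y \<in> \<Phi> ` clG {..<n}"
      then obtain F where F: "F \<in> clG {..<n}" "y = \<Phi> F" by blast
      then have h: "ok {..<n} F" "deg F 0 = 1" using mem by auto
      have fin: "finite F" using ok_finite[OF _ h(1)] by simp
      define m where "m = nb F"
      have m: "{0,m} \<in> F" "0 < m" "m < n" using nb_prop[OF h] unfolding m_def by auto
      define P1 where "P1 = res F {1..m}"
      define P2 where "P2 = res F {m..<n}"
      have fP: "finite P1" "finite P2" using fin unfolding P1_def P2_def res_def by auto
      have okP: "ok {1..m} P1" "ok {m..<n} P2" unfolding P1_def P2_def using ok_res[OF h(1) fin] by auto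
      have dm: "deg F m = deg P1 m + deg P2 m + 1" using split1(2)[OF h(1) m(1) h(2) m(2,3)] unfolding P1_def P2_def by simp
      have "deg P1 m + deg P2 m \<le> 1" using dm okE(3)[OF h(1), of m] by linarith
      have e1: "{1..m} - {m} = {1..<m}" "{m..<n} - {m} = {m<..<n}" by auto
      have mx: "Max {1..m} = m" by (rule Max_eqI) (use m in auto)
      have mn: "Min {m..<n} = m" by (rule Min_eqI) (use m in auto)
      have "(P1, P2) \<in> T m"
      proof (cases "deg P1 m = 1")
        case True
        then have "deg P2 m = 0" using \<open>deg P1 m + deg P2 m \<le> 1\<close> by simp
        then have "P2 \<in> clA {m<..<n}" using ok_del[OF okP(2) fP(2), of m] e1 unfolding clA_def by simp
        moreover have "P1 \<in> clGm {1..m}" using okP(1) True mx unfolding clGm_def by simp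
        ultimately show ?thesis unfolding T_def by blast
      next
        case False
        then have "deg P1 m = 0" using \<open>deg P1 m + deg P2 m \<le> 1\<close> by simp
        then have "P1 \<in> clA {1..<m}" using ok_del[OF okP(1) fP(1), of m] e1 unfolding clA_def by simp
        moreover have "P2 \<in> clA {m<..<n} \<union> clG {m..<n}"
        proof (cases "deg P2 m = 0")
          case True
          then show ?thesis using ok_del[OF okP(2) fP(2), of m] e1 unfolding clA_def by simp
        next
          case False
          then have "deg P2 m = 1" using \<open>deg P1 m + deg P2 m \<le> 1\<close> by simp
          then show ?thesis using okP(2) mn unfolding clG_def by simp
        qed
        ultimately show ?thesis unfolding T_def by blast
      qed
      then show "y \<in> Sigma {1..<n} T" using F(2) m unfolding \<Phi>_def P1_def P2_def m_def by simp
    qed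
  qed
  also have "\<dots> = (\<Sum>m\<in>{1..<n}. card (T m))"
    by (rule card_SigmaI) (simp_all add: T_def cl_finite)
  also have "\<dots> \<le> (\<Sum>m\<in>{1..<n}. card (clGm {1..m}) * card (clA {m<..<n})
     + card (clA {1..<m}) * (card (clA {m<..<n}) + card (clG {m..<n})))"
    unfolding T_def by (intro sum_mono card_Un_le2 card_prod_le order_refl)
  finally show ?thesis .
qed


lemma tjoin_ext:
  assumes fin: "finite F" and e: "{0,m} \<in> F" and Q: "Q \<subseteq> F" "{0,m} \<notin> Q" "deg Q 0 = 0"
    and tj: "tjoin Q m b" and ne: "b \<noteq> 0" "b \<noteq> m" "m \<noteq> 0"
  shows "tjoin F 0 b"
proof -
  obtain F' where F': "F' \<subseteq> Q" "deg F' m = 1" "deg F' b = 1" "\<forall>v. v \<noteq> m \<longrightarrow> v \<noteq> b \<longrightarrow> deg F' v \<noteq> 1"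
    using tj unfolding tjoin_def by blast
  have finF': "finite F'" using F'(1) Q(1) fin by (meson finite_subset)
  have nin: "{0,m} \<notin> F'" using F'(1) Q(2) by blast
  define F'' where "F'' = insert {0,m} F'"
  have d: "deg F'' v = deg F' v + (if v \<in> {0,m} then 1 else 0)" for v
    unfolding F''_def by (rule deg_insert[OF finF' nin])
  have d0: "deg F' 0 = 0" using deg_mono[OF _ F'(1), of 0] Q(3) fin Q(1) by (metis finite_subset le_zero_eq)
  have "F'' \<subseteq> F" unfolding F''_def using F'(1) Q(1) e by blast
  moreover have "deg F'' 0 = 1" using d[of 0] d0 by simp
  moreover have "deg F'' b = 1" using d[of b] F'(3) ne by simp
  moreover have "deg F'' v \<noteq> 1" if "v \<noteq> 0" "v \<noteq> b" for v
  proof (cases "v = m")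
    case True
    then show ?thesis using d[of v] F'(2) by simp
  next
    case False
    then show ?thesis using d[of v] F'(4) that by simp
  qed
  ultimately show ?thesis unfolding tjoin_def by blast
qed

lemma decX: "card (clX {..<n}) \<le> (\<Sum>m\<in>{1..<n-1}. card (clGm {1..m}) * card (clGm {m<..<n})
     + card (clA {1..<m}) * (card (clX {m..<n}) + card (clGm {m<..<n})))"
proof -
  define T where "T m = clGm {1..m} \<times> clGm {m<..<n} \<union> clA {1..<m} \<times> (clX {m..<n} \<union> clGm {m<..<n})" for m
  define \<Phi> where "\<Phi> F = (nb F, (res F {1..nb F}, res F {nb F..<n}))" for F
  have mem: "F \<in> clX {..<n} \<Longrightarrow> 0 < n \<and> ok {..<n} F \<and> deg F 0 = 1 \<and> deg F (n-1) = 1 \<and> \<not> tjoin F 0 (n-1)" for F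
  proof -
    assume "F \<in> clX {..<n}"
    then have h: "ok {..<n} F" "deg F (Min {..<n}) = 1" "deg F (Max {..<n}) = 1"
      "\<not> tjoin F (Min {..<n}) (Max {..<n})" unfolding clX_def by auto
    have "n \<noteq> 0" proof assume "n = 0" then have "F = {}" using h(1) ok_empty by simp
      then show False using h(2) by simp qed
    then show ?thesis using h Min_lt Max_lt by simp
  qed
  have "card (clX {..<n}) \<le> card (Sigma {1..<n-1} T)"
  proof (rule card_inj_on_le)
    show "finite (Sigma {1..<n-1} T)" unfolding T_def by (intro finite_SigmaI) (simp_all add: cl_finite)
    show "inj_on \<Phi> (clX {..<n})"
    proof (rule inj_onI)
      fix F1 F2 assume "F1 \<in> clX {..<n}" "F2 \<in> clX {..<n}" "\<Phi> F1 = \<Phi> F2"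
      then have h1: "ok {..<n} F1" "deg F1 0 = 1" and h2: "ok {..<n} F2" "deg F2 0 = 1"
        and e: "nb F1 = nb F2" "res F1 {1..nb F1} = res F2 {1..nb F2}" "res F1 {nb F1..<n} = res F2 {nb F2..<n}"
        using mem unfolding \<Phi>_def by auto
      have A: "F1 = insert {0, nb F1} (res F1 {1..nb F1} \<union> res F1 {nb F1..<n})"
        by (rule split1(1)[OF h1(1) nb_prop(1)[OF h1] h1(2) nb_prop(2,3)[OF h1]])
      have B: "F2 = insert {0, nb F2} (res F2 {1..nb F2} \<union> res F2 {nb F2..<n})"
        by (rule split1(1)[OF h2(1) nb_prop(1)[OF h2] h2(2) nb_prop(2,3)[OF h2]])
      have "insert {0, nb F1} (res F1 {1..nb F1} \<union> res F1 {nb F1..<n}) = insert {0, nb F1} (res F2 {1..nb F2} \<union> res F2 {nb F2..<n})"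
        by (simp only: e(2) e(3))
      then show "F1 = F2" using A B e(1) by simp
    qed
    show "\<Phi> ` clX {..<n} \<subseteq> Sigma {1..<n-1} T"
    proof
      fix y assume "y \<in> \<Phi> ` clX {..<n}"
      then obtain F where F: "F \<in> clX {..<n}" "y = \<Phi> F" by blast
      then have h: "ok {..<n} F" "deg F 0 = 1" and hX: "deg F (n-1) = 1" "\<not> tjoin F 0 (n-1)" using mem by auto
      have fin: "finite F" using ok_finite[OF _ h(1)] by simp
      define m where "m = nb F"
      have m: "{0,m} \<in> F" "0 < m" "m < n" using nb_prop[OF h] unfolding m_def by auto
      have "m \<noteq> n - 1"
      proof
        assume mn1: "m = n - 1"
        have "tjoin F 0 (n-1)" unfolding tjoin_def
        proof (intro exI[of _ "{{0,m}}"] conjI allI impI)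
          show "{{0,m}} \<subseteq> F" using m by simp
          show "deg {{0,m}} 0 = 1" by (simp add: deg_single)
          show "deg {{0,m}} (n-1) = 1" using mn1 by (simp add: deg_single)
          fix v assume "v \<noteq> 0" "v \<noteq> n - 1"
          then show "deg {{0,m}} v \<noteq> 1" using mn1 by (simp add: deg_single)
        qed
        then show False using hX by simp
      qed
      then have mlt: "m < n - 1" using m by simp
      define P1 where "P1 = res F {1..m}"
      define P2 where "P2 = res F {m..<n}"
      have fP: "finite P1" "finite P2" using fin unfolding P1_def P2_def res_def by auto
      have okP: "ok {1..m} P1" "ok {m..<n} P2" unfolding P1_def P2_def using ok_res[OF h(1) fin] by auto
      have dsp: "deg F v = deg P1 v + deg P2 v + (if v \<in> {0,m} then 1 else 0)" for v
        using split1(2)[OF h(1) m(1) h(2) m(2,3)] unfolding P1_def P2_def by simp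
      have dm: "deg F m = deg P1 m + deg P2 m + 1" using dsp[of m] by simp
      have "deg P1 m + deg P2 m \<le> 1" using dm okE(3)[OF h(1), of m] by linarith
      have dn: "deg P2 (n-1) = 1"
      proof -
        have "deg P1 (n-1) = 0" unfolding P1_def using mlt by (intro deg_res_out) simp
        moreover have "n - 1 \<notin> {0,m}" using mlt m(2) by auto
        ultimately show ?thesis using dsp[of "n-1"] hX(1) by simp
      qed
      have e1: "{1..m} - {m} = {1..<m}" "{m..<n} - {m} = {m<..<n}" by auto
      have mx: "Max {1..m} = m" by (rule Max_eqI) (use m in auto)
      have mn: "Min {m..<n} = m" by (rule Min_eqI) (use m in auto)
      have mx2: "Max {m..<n} = n-1" by (rule Max_eqI) (use mlt in auto)
      have mx3: "Max {m<..<n} = n-1" by (rule Max_eqI) (use mlt in auto)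
      have G2: "P2 \<in> clGm {m<..<n}" if "deg P2 m = 0"
        using ok_del[OF okP(2) fP(2), of m] that e1 dn mx3 unfolding clGm_def by simp
      have "(P1, P2) \<in> T m"
      proof (cases "deg P1 m = 1")
        case True
        then have "deg P2 m = 0" using \<open>deg P1 m + deg P2 m \<le> 1\<close> by simp
        then have "P2 \<in> clGm {m<..<n}" by (rule G2)
        moreover have "P1 \<in> clGm {1..m}" using okP(1) True mx unfolding clGm_def by simp
        ultimately show ?thesis unfolding T_def by blast
      next
        case False
        then have "deg P1 m = 0" using \<open>deg P1 m + deg P2 m \<le> 1\<close> by simp
        then have "P1 \<in> clA {1..<m}" using ok_del[OF okP(1) fP(1), of m] e1 unfolding clA_def by simp
        moreover have "P2 \<in> clX {m..<n} \<union> clGm {m<..<n}"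
        proof (cases "deg P2 m = 0")
          case True
          then show ?thesis using G2 by simp
        next
          case False
          then have d1: "deg P2 m = 1" using \<open>deg P1 m + deg P2 m \<le> 1\<close> by simp
          have "\<not> tjoin P2 m (n-1)"
          proof
            assume tj: "tjoin P2 m (n-1)"
            have "P2 \<subseteq> F" "{0,m} \<notin> P2" "deg P2 0 = 0" unfolding P2_def res_def using m
              by (auto intro: deg_res_out[unfolded res_def])
            then have "tjoin F 0 (n-1)" using tjoin_ext[OF fin m(1) _ _ _ tj] mlt m(2) by simp
            then show False using hX by simp
          qed
          then show ?thesis using okP(2) d1 dn mn mx2 unfolding clX_def by simp
        qed
        ultimately show ?thesis unfolding T_def by blast
      qed
      then show "y \<in> Sigma {1..<n-1} T" using F(2) m mlt unfolding \<Phi>_def P1_def P2_def m_def by simp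
    qed
  qed
  also have "\<dots> = (\<Sum>m\<in>{1..<n-1}. card (T m))"
    by (rule card_SigmaI) (simp_all add: T_def cl_finite)
  also have "\<dots> \<le> (\<Sum>m\<in>{1..<n-1}. card (clGm {1..m}) * card (clGm {m<..<n})
     + card (clA {1..<m}) * (card (clX {m..<n}) + card (clGm {m<..<n})))"
    unfolding T_def by (intro sum_mono card_Un_le2 card_prod_le order_refl)
  finally show ?thesis .
qed


lemma acyc_viol:
  assumes fin: "finite F" and e: "{0,m1} \<in> F" "{0,m2} \<in> F" and Q: "Q \<subseteq> F" "{0,m1} \<notin> Q" "{0,m2} \<notin> Q" "deg Q 0 = 0"
    and tj: "tjoin Q m1 m2" and ne: "m1 \<noteq> m2" "m1 \<noteq> 0" "m2 \<noteq> 0"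
  shows "\<not> acyc F"
proof
  assume ac: "acyc F"
  obtain F' where F': "F' \<subseteq> Q" "deg F' m1 = 1" "deg F' m2 = 1" "\<forall>v. v \<noteq> m1 \<longrightarrow> v \<noteq> m2 \<longrightarrow> deg F' v \<noteq> 1"
    using tj unfolding tjoin_def by blast
  have finF': "finite F'" using F'(1) Q(1) fin by (meson finite_subset)
  have nin: "{0,m1} \<notin> insert {0,m2} F'" "{0,m2} \<notin> F'" using F'(1) Q(2,3) ne by (auto simp: doubleton_eq_iff)
  define F'' where "F'' = insert {0,m1} (insert {0,m2} F')"
  have d: "deg F'' v = deg F' v + (if v \<in> {0,m2} then 1 else 0) + (if v \<in> {0,m1} then 1 else 0)" for v
    unfolding F''_def using deg_insert[OF _ nin(1)] deg_insert[OF finF' nin(2)] finF' by simp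
  have finQ: "finite Q" using Q(1) fin finite_subset by blast
  have d0: "deg F' 0 = 0" using deg_mono[OF finQ F'(1), of 0] Q(4) by linarith
  have "F'' \<subseteq> F" unfolding F''_def using F'(1) Q(1) e by blast
  moreover have "deg F'' v \<noteq> 1" for v
  proof -
    consider "v = 0" | "v = m1" | "v = m2" | "v \<noteq> 0" "v \<noteq> m1" "v \<noteq> m2" by blast
    then show ?thesis
    proof cases
      case 1 then show ?thesis using d[of v] d0 by simp
    next
      case 2 then show ?thesis using d[of v] F'(2) ne by simp
    next
      case 3 then show ?thesis using d[of v] F'(3) ne by simp
    next
      case 4 then show ?thesis using d[of v] F'(4) by simp
    qed
  qed
  ultimately have "F'' = {}" using ac unfolding acyc_def by blast
  then show False unfolding F''_def by simp
qed

lemma edge_sing: "ok V F \<Longrightarrow> e \<in> F \<Longrightarrow> e \<subseteq> {x} \<Longrightarrow> False"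
proof -
  assume "ok V F" "e \<in> F" "e \<subseteq> {x}"
  then obtain u w where "u < w" "e = {u,w}" using okE(1) by blast
  then have "u = x" "w = x" using \<open>e \<subseteq> {x}\<close> by auto
  then show False using \<open>u < w\<close> by simp
qed

lemma dbl_eq: "{x,m} = {x,a} \<Longrightarrow> m = a"
  by (metis doubleton_eq_iff)

lemma two_nbrs: assumes "ok {..<n} F" "deg F 0 = 2"
  shows "\<exists>m1 m2. 0 < m1 \<and> m1 < m2 \<and> m2 < n \<and> {m. {0,m} \<in> F} = {m1,m2} \<and> {e\<in>F. 0 \<in> e} = {{0,m1},{0,m2}}"
proof -
  have "card {e\<in>F. 0 \<in> e} = 2" using assms(2) unfolding deg_def .
  then obtain e1 e2 where E: "{e\<in>F. 0 \<in> e} = {e1,e2}" "e1 \<noteq> e2" unfolding card_2_iff by blast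
  have "e1 \<in> {e\<in>F. 0 \<in> e}" "e2 \<in> {e\<in>F. 0 \<in> e}" unfolding E(1) by simp_all
  then have "e1 \<in> F" "0 \<in> e1" "e2 \<in> F" "0 \<in> e2" by simp_all
  obtain a where a: "0 < a" "a \<in> {..<n}" "e1 = {0,a}" using edge0[OF assms(1) \<open>e1 \<in> F\<close> \<open>0 \<in> e1\<close>] by blast
  obtain b where b: "0 < b" "b \<in> {..<n}" "e2 = {0,b}" using edge0[OF assms(1) \<open>e2 \<in> F\<close> \<open>0 \<in> e2\<close>] by blast
  have "a \<noteq> b" using E(2) a(3) b(3) by auto
  have S: "{m. {0,m} \<in> F} = {a,b}"
  proof
    show "{a,b} \<subseteq> {m. {0,m} \<in> F}" using \<open>e1 \<in> F\<close> \<open>e2 \<in> F\<close> a(3) b(3) by simp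
    show "{m. {0,m} \<in> F} \<subseteq> {a,b}"
    proof
      fix m assume "m \<in> {m. {0,m} \<in> F}"
      then have "{0,m} \<in> {e\<in>F. 0 \<in> e}" by simp
      then have "{0,m} = {0,a} \<or> {0,m} = {0,b}" unfolding E(1) a(3) b(3) by simp
      then show "m \<in> {a,b}" using dbl_eq[of 0 m a] dbl_eq[of 0 m b] by auto
    qed
  qed
  have E2: "{e\<in>F. 0 \<in> e} = {{0,a},{0,b}}" using E(1) a(3) b(3) by simp
  have an: "a < n" "b < n" using a(2) b(2) by simp_all
  show ?thesis
  proof (cases "a < b")
    case True
    show ?thesis by (rule exI[of _ a], rule exI[of _ b]) (use S E2 a(1) an True in simp)
  next
    case False
    then have "b < a" using \<open>a \<noteq> b\<close> by simp
    have S': "{m. {0,m} \<in> F} = {b,a}" "{e\<in>F. 0 \<in> e} = {{0,b},{0,a}}" using S E2 by (simp_all add: insert_commute)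
    show ?thesis by (rule exI[of _ b], rule exI[of _ a]) (use S' b(1) an \<open>b < a\<close> in simp)
  qed
qed

lemma split2:
  assumes ok: "ok {..<n} F" and d0: "deg F 0 = 2" and E: "{e\<in>F. 0 \<in> e} = {{0,m1},{0,m2}}"
    and mm: "0 < m1" "m1 < m2" "m2 < n"
  shows "F = insert {0,m1} (insert {0,m2} (res F {1..m1} \<union> res F {m1..m2} \<union> res F {m2..<n}))"
    and "deg F v = deg (res F {1..m1}) v + deg (res F {m1..m2}) v + deg (res F {m2..<n}) v
           + (if v \<in> {0,m2} then 1 else 0) + (if v \<in> {0,m1} then 1 else 0)"
proof -
  have fin: "finite F" using ok_finite[OF _ ok] by simp
  have m0: "{0,m1} \<in> F" "{0,m2} \<in> F" using E by blast+
  show eq: "F = insert {0,m1} (insert {0,m2} (res F {1..m1} \<union> res F {m1..m2} \<union> res F {m2..<n}))"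
  proof
    show "insert {0,m1} (insert {0,m2} (res F {1..m1} \<union> res F {m1..m2} \<union> res F {m2..<n})) \<subseteq> F"
      using m0 unfolding res_def by blast
    show "F \<subseteq> insert {0,m1} (insert {0,m2} (res F {1..m1} \<union> res F {m1..m2} \<union> res F {m2..<n}))"
    proof
      fix e assume eF: "e \<in> F"
      obtain u w where uw: "u < w" "w < n" "e = {u,w}" using okE(1)[OF ok eF] by auto
      show "e \<in> insert {0,m1} (insert {0,m2} (res F {1..m1} \<union> res F {m1..m2} \<union> res F {m2..<n}))"
      proof (cases "e = {0,m1} \<or> e = {0,m2}")
        case True then show ?thesis by auto
      next
        case False
        have "u \<noteq> 0"
        proof
          assume "u = 0"
          then have "e \<in> {e\<in>F. 0 \<in> e}" using eF uw by simp
          then show False using False E by blast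
        qed
        have nc: "\<not> (u < m \<and> m < w)" if "{0,m} \<in> F" for m
        proof
          assume "u < m \<and> m < w"
          then show False using okE(2)[OF ok, of 0 u m w] that eF uw \<open>u \<noteq> 0\<close> by simp
        qed
        have c: "w \<le> m1 \<or> (m1 \<le> u \<and> w \<le> m2) \<or> m2 \<le> u"
          using nc[OF m0(1)] nc[OF m0(2)] uw(1) mm by linarith
        have "e \<subseteq> {1..m1} \<or> e \<subseteq> {m1..m2} \<or> e \<subseteq> {m2..<n}"
          using c uw \<open>u \<noteq> 0\<close> by auto
        then show ?thesis using eF unfolding res_def by blast
      qed
    qed
  qed
  define P1 where "P1 = res F {1..m1}"
  define P2 where "P2 = res F {m1..m2}"
  define P3 where "P3 = res F {m2..<n}"
  have f: "finite P1" "finite P2" "finite P3" using fin unfolding P1_def P2_def P3_def res_def by auto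
  have disj: "P1 \<inter> P2 = {}" "P1 \<inter> P3 = {}" "P2 \<inter> P3 = {}"
  proof -
    show "P1 \<inter> P2 = {}"
    proof (rule ccontr)
      assume "P1 \<inter> P2 \<noteq> {}"
      then obtain e where e: "e \<in> F" "e \<subseteq> {1..m1}" "e \<subseteq> {m1..m2}" unfolding P1_def P2_def res_def by blast
      have "x = m1" if "x \<in> e" for x
      proof -
        have "x \<in> {1..m1}" "x \<in> {m1..m2}" using e that by blast+
        then show ?thesis by simp
      qed
      then have "e \<subseteq> {m1}" by blast
      then show False using edge_sing[OF ok e(1)] by blast
    qed
    show "P2 \<inter> P3 = {}"
    proof (rule ccontr)
      assume "P2 \<inter> P3 \<noteq> {}"
      then obtain e where e: "e \<in> F" "e \<subseteq> {m1..m2}" "e \<subseteq> {m2..<n}" unfolding P3_def P2_def res_def by blast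
      have "x = m2" if "x \<in> e" for x
      proof -
        have "x \<in> {m1..m2}" "x \<in> {m2..<n}" using e that by blast+
        then show ?thesis by simp
      qed
      then have "e \<subseteq> {m2}" by blast
      then show False using edge_sing[OF ok e(1)] by blast
    qed
    show "P1 \<inter> P3 = {}"
    proof (rule ccontr)
      assume "P1 \<inter> P3 \<noteq> {}"
      then obtain e where e: "e \<in> F" "e \<subseteq> {1..m1}" "e \<subseteq> {m2..<n}" unfolding P1_def P3_def res_def by blast
      have "False" if "x \<in> e" for x
      proof -
        have "x \<in> {1..m1}" "x \<in> {m2..<n}" using e that by blast+
        then show ?thesis using mm by simp
      qed
      then have "e \<subseteq> {}" by blast
      then show False using edge_sing[OF ok e(1)] by blast
    qed
  qed
  have f3: "finite (P1 \<union> P2 \<union> P3)" using f by simp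
  have notin: "{0,m2} \<notin> P1 \<union> P2 \<union> P3" "{0,m1} \<notin> insert {0,m2} (P1 \<union> P2 \<union> P3)"
    using mm unfolding P1_def P2_def P3_def res_def by (auto simp: doubleton_eq_iff)
  have "deg F v = deg (insert {0,m1} (insert {0,m2} (P1 \<union> P2 \<union> P3))) v"
    unfolding P1_def P2_def P3_def by (simp only: eq[symmetric])
  also have "\<dots> = deg (insert {0,m2} (P1 \<union> P2 \<union> P3)) v + (if v \<in> {0,m1} then 1 else 0)"
    by (rule deg_insert) (use f3 notin in simp_all)
  also have "deg (insert {0,m2} (P1 \<union> P2 \<union> P3)) v = deg (P1 \<union> P2 \<union> P3) v + (if v \<in> {0,m2} then 1 else 0)"
    by (rule deg_insert) (use f3 notin in simp_all)
  also have "deg (P1 \<union> P2 \<union> P3) v = deg P1 v + deg P2 v + deg P3 v"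
    by (rule deg_split3) (use f disj in simp_all)
  finally show "deg F v = deg (res F {1..m1}) v + deg (res F {m1..m2}) v + deg (res F {m2..<n}) v
           + (if v \<in> {0,m2} then 1 else 0) + (if v \<in> {0,m1} then 1 else 0)"
    unfolding P1_def P2_def P3_def .
qed


definition G2set :: "nat \<Rightarrow> nat set set set" where "G2set n = {F. ok {..<n} F \<and> deg F 0 = 2}"
definition mm1 :: "nat set set \<Rightarrow> nat" where "mm1 F = Min {m. {0,m} \<in> F}"
definition mm2 :: "nat set set \<Rightarrow> nat" where "mm2 F = Max {m. {0,m} \<in> F}"

lemma mm_prop: assumes "ok {..<n} F" "deg F 0 = 2"
  shows "0 < mm1 F" "mm1 F < mm2 F" "mm2 F < n" "{e\<in>F. 0 \<in> e} = {{0,mm1 F},{0,mm2 F}}"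
proof -
  obtain m1 m2 where h: "0 < m1" "m1 < m2" "m2 < n" "{m. {0,m} \<in> F} = {m1,m2}" "{e\<in>F. 0 \<in> e} = {{0,m1},{0,m2}}"
    using two_nbrs[OF assms] by blast
  have "mm1 F = m1" unfolding mm1_def h(4) using h(2) by simp
  moreover have "mm2 F = m2" unfolding mm2_def h(4) using h(2) by simp
  ultimately show "0 < mm1 F" "mm1 F < mm2 F" "mm2 F < n" "{e\<in>F. 0 \<in> e} = {{0,mm1 F},{0,mm2 F}}"
    using h by simp_all
qed

definition Pairs :: "nat \<Rightarrow> (nat \<times> nat) set" where "Pairs n = {(m1,m2). 0 < m1 \<and> m1 < m2 \<and> m2 < n}"

definition TS :: "nat \<Rightarrow> nat \<Rightarrow> nat \<Rightarrow> (nat set set \<times> nat set set \<times> nat set set) set" where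
  "TS n m1 m2 = (clA {1..<m1} \<union> clGm {1..m1}) \<times> (clA {m1<..<m2} \<times> (clA {m2<..<n} \<union> clG {m2..<n}))
    \<union> (clA {1..<m1} \<union> clGm {1..m1}) \<times> (clGm {m1<..m2} \<times> clA {m2<..<n})
    \<union> clA {1..<m1} \<times> (clG {m1..<m2} \<times> (clA {m2<..<n} \<union> clG {m2..<n}))
    \<union> clA {1..<m1} \<times> (clX {m1..m2} \<times> clA {m2<..<n})"

definition TT :: "nat \<Rightarrow> nat \<Rightarrow> nat \<Rightarrow> nat" where
  "TT n m1 m2 = (card (clA {1..<m1}) + card (clGm {1..m1})) * (card (clA {m1<..<m2}) * (card (clA {m2<..<n}) + card (clG {m2..<n})))
    + (card (clA {1..<m1}) + card (clGm {1..m1})) * (card (clGm {m1<..m2}) * card (clA {m2<..<n}))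
    + card (clA {1..<m1}) * (card (clG {m1..<m2}) * (card (clA {m2<..<n}) + card (clG {m2..<n})))
    + card (clA {1..<m1}) * (card (clX {m1..m2}) * card (clA {m2<..<n}))"

lemma card_TS: "card (TS n m1 m2) \<le> TT n m1 m2"
  unfolding TS_def TT_def by (intro card_Un_le2 card_prod_le order_refl)

lemma fin_TS: "finite (TS n m1 m2)"
  unfolding TS_def by (simp add: cl_finite)

lemma decG2: "card (G2set n) \<le> (\<Sum>p\<in>Pairs n. TT n (fst p) (snd p))"
proof -
  define \<Phi> where "\<Phi> F = ((mm1 F, mm2 F), (res F {1..mm1 F}, (res F {mm1 F..mm2 F}, res F {mm2 F..<n})))" for F
  have finP: "finite (Pairs n)"
  proof -
    have "Pairs n \<subseteq> {..<n} \<times> {..<n}" unfolding Pairs_def by auto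
    then show ?thesis by (rule finite_subset) simp
  qed
  have "card (G2set n) \<le> card (Sigma (Pairs n) (\<lambda>p. TS n (fst p) (snd p)))"
  proof (rule card_inj_on_le)
    show "finite (Sigma (Pairs n) (\<lambda>p. TS n (fst p) (snd p)))" using finP fin_TS by (intro finite_SigmaI) auto
    show "inj_on \<Phi> (G2set n)"
    proof (rule inj_onI)
      fix F1 F2 assume "F1 \<in> G2set n" "F2 \<in> G2set n" "\<Phi> F1 = \<Phi> F2"
      then have h1: "ok {..<n} F1" "deg F1 0 = 2" and h2: "ok {..<n} F2" "deg F2 0 = 2"
        and e: "mm1 F1 = mm1 F2" "mm2 F1 = mm2 F2" "res F1 {1..mm1 F1} = res F2 {1..mm1 F2}"
          "res F1 {mm1 F1..mm2 F1} = res F2 {mm1 F2..mm2 F2}" "res F1 {mm2 F1..<n} = res F2 {mm2 F2..<n}"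
        unfolding \<Phi>_def G2set_def by auto
      have A: "F1 = insert {0,mm1 F1} (insert {0,mm2 F1} (res F1 {1..mm1 F1} \<union> res F1 {mm1 F1..mm2 F1} \<union> res F1 {mm2 F1..<n}))"
        by (rule split2(1)[OF h1 mm_prop(4)[OF h1] mm_prop(1-3)[OF h1]])
      have B: "F2 = insert {0,mm1 F2} (insert {0,mm2 F2} (res F2 {1..mm1 F2} \<union> res F2 {mm1 F2..mm2 F2} \<union> res F2 {mm2 F2..<n}))"
        by (rule split2(1)[OF h2 mm_prop(4)[OF h2] mm_prop(1-3)[OF h2]])
      have "insert {0,mm1 F1} (insert {0,mm2 F1} (res F1 {1..mm1 F1} \<union> res F1 {mm1 F1..mm2 F1} \<union> res F1 {mm2 F1..<n}))
          = insert {0,mm1 F1} (insert {0,mm2 F1} (res F2 {1..mm1 F2} \<union> res F2 {mm1 F2..mm2 F2} \<union> res F2 {mm2 F2..<n}))"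
        by (simp only: e(3) e(4) e(5))
      then show "F1 = F2" using A B e(1,2) by simp
    qed
    show "\<Phi> ` G2set n \<subseteq> Sigma (Pairs n) (\<lambda>p. TS n (fst p) (snd p))"
    proof
      fix y assume "y \<in> \<Phi> ` G2set n"
      then obtain F where F: "F \<in> G2set n" "y = \<Phi> F" by blast
      then have h: "ok {..<n} F" "deg F 0 = 2" unfolding G2set_def by auto
      have fin: "finite F" using ok_finite[OF _ h(1)] by simp
      define m1 where "m1 = mm1 F"
      define m2 where "m2 = mm2 F"
      have mm: "0 < m1" "m1 < m2" "m2 < n" "{e\<in>F. 0 \<in> e} = {{0,m1},{0,m2}}"
        using mm_prop[OF h] unfolding m1_def m2_def by auto
      have m0: "{0,m1} \<in> F" "{0,m2} \<in> F"
      proof -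
        have "{0,m1} \<in> {e\<in>F. 0 \<in> e}" "{0,m2} \<in> {e\<in>F. 0 \<in> e}" unfolding mm(4) by simp_all
        then show "{0,m1} \<in> F" "{0,m2} \<in> F" by simp_all
      qed
      define P1 where "P1 = res F {1..m1}"
      define P2 where "P2 = res F {m1..m2}"
      define P3 where "P3 = res F {m2..<n}"
      have fP: "finite P1" "finite P2" "finite P3" using fin unfolding P1_def P2_def P3_def res_def by auto
      have okP: "ok {1..m1} P1" "ok {m1..m2} P2" "ok {m2..<n} P3"
        unfolding P1_def P2_def P3_def using ok_res[OF h(1) fin] by auto
      have dsp: "deg F v = deg P1 v + deg P2 v + deg P3 v + (if v \<in> {0,m2} then 1 else 0) + (if v \<in> {0,m1} then 1 else 0)" for v
        using split2(2)[OF h mm(4) mm(1-3)] unfolding P1_def P2_def P3_def by simp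
      have z1: "deg P3 m1 = 0" unfolding P3_def using mm by (intro deg_res_out) simp
      have z2: "deg P1 m2 = 0" unfolding P1_def using mm by (intro deg_res_out) simp
      have "deg F m1 = deg P1 m1 + deg P2 m1 + 1" using dsp[of m1] z1 mm by simp
      then have s1: "deg P1 m1 + deg P2 m1 \<le> 1" using okE(3)[OF h(1), of m1] by linarith
      have "deg F m2 = deg P2 m2 + deg P3 m2 + 1" using dsp[of m2] z2 mm by simp
      then have s2: "deg P2 m2 + deg P3 m2 \<le> 1" using okE(3)[OF h(1), of m2] by linarith
      have A1: "P1 \<in> clA {1..<m1}" if "deg P1 m1 = 0"
      proof -
        have "{1..m1} - {m1} = {1..<m1}" by auto
        then show ?thesis using ok_del[OF okP(1) fP(1) that] unfolding clA_def by simp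
      qed
      have A1': "P1 \<in> clA {1..<m1} \<union> clGm {1..m1}"
      proof (cases "deg P1 m1 = 0")
        case True then show ?thesis using A1 by simp
      next
        case False
        then have "deg P1 m1 = 1" using s1 by simp
        moreover have "Max {1..m1} = m1" by (rule Max_eqI) (use mm in auto)
        ultimately show ?thesis using okP(1) unfolding clGm_def by simp
      qed
      have A3: "P3 \<in> clA {m2<..<n}" if "deg P3 m2 = 0"
      proof -
        have "{m2..<n} - {m2} = {m2<..<n}" by auto
        then show ?thesis using ok_del[OF okP(3) fP(3) that] unfolding clA_def by simp
      qed
      have A3': "P3 \<in> clA {m2<..<n} \<union> clG {m2..<n}"
      proof (cases "deg P3 m2 = 0")
        case True then show ?thesis using A3 by simp
      next
        case False
        then have "deg P3 m2 = 1" using s2 by simp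
        moreover have "Min {m2..<n} = m2" by (rule Min_eqI) (use mm in auto)
        ultimately show ?thesis using okP(3) unfolding clG_def by simp
      qed
      have "(P1, (P2, P3)) \<in> TS n m1 m2"
      proof (cases "deg P2 m1 = 0")
        case True
        note t1 = True
        show ?thesis
        proof (cases "deg P2 m2 = 0")
          case True
          have "{m1..m2} - {m1} - {m2} = {m1<..<m2}" by auto
          moreover have "ok ({m1..m2} - {m1}) P2" by (rule ok_del[OF okP(2) fP(2) t1])
          then have "ok ({m1..m2} - {m1} - {m2}) P2" by (rule ok_del[OF _ fP(2) True])
          ultimately have "P2 \<in> clA {m1<..<m2}" unfolding clA_def by simp
          then show ?thesis using A1' A3' unfolding TS_def by blast
        next
          case False
          then have t2: "deg P2 m2 = 1" "deg P3 m2 = 0" using s2 by auto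
          have "{m1..m2} - {m1} = {m1<..m2}" by auto
          then have "ok {m1<..m2} P2" using ok_del[OF okP(2) fP(2) t1] by simp
          moreover have "Max {m1<..m2} = m2" by (rule Max_eqI) (use mm in auto)
          ultimately have "P2 \<in> clGm {m1<..m2}" using t2 unfolding clGm_def by simp
          then show ?thesis using A1' A3[OF t2(2)] unfolding TS_def by blast
        qed
      next
        case False
        then have t1: "deg P2 m1 = 1" "deg P1 m1 = 0" using s1 by auto
        show ?thesis
        proof (cases "deg P2 m2 = 0")
          case True
          have "{m1..m2} - {m2} = {m1..<m2}" by auto
          then have "ok {m1..<m2} P2" using ok_del[OF okP(2) fP(2) True] by simp
          moreover have "Min {m1..<m2} = m1" by (rule Min_eqI) (use mm in auto)
          ultimately have "P2 \<in> clG {m1..<m2}" using t1 unfolding clG_def by simp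
          then show ?thesis using A1[OF t1(2)] A3' unfolding TS_def by blast
        next
          case False
          then have t2: "deg P2 m2 = 1" "deg P3 m2 = 0" using s2 by auto
          have "\<not> tjoin P2 m1 m2"
          proof
            assume tj: "tjoin P2 m1 m2"
            have q: "P2 \<subseteq> F" "{0,m1} \<notin> P2" "{0,m2} \<notin> P2" unfolding P2_def res_def using mm by auto
            have q2: "deg P2 0 = 0" unfolding P2_def using mm by (intro deg_res_out) simp
            have "\<not> acyc F" by (rule acyc_viol[OF fin m0 q q2 tj]) (use mm in auto)
            then show False using okE(4)[OF h(1)] by simp
          qed
          moreover have "Min {m1..m2} = m1" by (rule Min_eqI) (use mm in auto)
          moreover have "Max {m1..m2} = m2" by (rule Max_eqI) (use mm in auto)
          ultimately have "P2 \<in> clX {m1..m2}" using okP(2) t1 t2 unfolding clX_def by simp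
          then show ?thesis using A1[OF t1(2)] A3[OF t2(2)] unfolding TS_def by blast
        qed
      qed
      moreover have "(m1, m2) \<in> Pairs n" using mm unfolding Pairs_def by simp
      ultimately show "y \<in> Sigma (Pairs n) (\<lambda>p. TS n (fst p) (snd p))"
        using F(2) unfolding \<Phi>_def P1_def P2_def P3_def m1_def m2_def by simp
    qed
  qed
  also have "\<dots> = (\<Sum>p\<in>Pairs n. card (TS n (fst p) (snd p)))"
    by (rule card_SigmaI) (simp_all add: finP fin_TS)
  also have "\<dots> \<le> (\<Sum>p\<in>Pairs n. TT n (fst p) (snd p))"
    by (intro sum_mono card_TS)
  finally show ?thesis .
qed

lemma decA: assumes "0 < n"
  shows "card (clA {..<n}) \<le> card (clA {1..<n}) + card (clG {..<n}) + card (G2set n)"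
proof -
  have sub: "clA {..<n} \<subseteq> clA {1..<n} \<union> clG {..<n} \<union> G2set n"
  proof
    fix F assume "F \<in> clA {..<n}"
    then have h: "ok {..<n} F" unfolding clA_def by simp
    have fin: "finite F" using ok_finite[OF _ h] by simp
    have "deg F 0 \<le> 2" using okE(3)[OF h] .
    then consider "deg F 0 = 0" | "deg F 0 = 1" | "deg F 0 = 2" by linarith
    then show "F \<in> clA {1..<n} \<union> clG {..<n} \<union> G2set n"
    proof cases
      case 1
      have "{..<n} - {0} = {1..<n}" by auto
      then have "F \<in> clA {1..<n}" using ok_del[OF h fin 1] unfolding clA_def by simp
      then show ?thesis by simp
    next
      case 2
      then have "F \<in> clG {..<n}" using h Min_lt[OF assms] unfolding clG_def by simp
      then show ?thesis by simp
    next
      case 3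
      then show ?thesis using h unfolding G2set_def by simp
    qed
  qed
  have fin: "finite (clA {1..<n} \<union> clG {..<n} \<union> G2set n)"
  proof -
    have "G2set n \<subseteq> clA {..<n}" unfolding G2set_def clA_def by auto
    then show ?thesis using cl_finite by (meson finite_Un finite_atLeastLessThan finite_lessThan finite_subset)
  qed
  have "card (clA {..<n}) \<le> card (clA {1..<n} \<union> clG {..<n} \<union> G2set n)" by (rule card_mono[OF fin sub])
  also have "\<dots> \<le> card (clA {1..<n}) + card (clG {..<n}) + card (G2set n)"
    by (intro card_Un_le2 order_refl)
  finally show ?thesis .
qed


lemma sum_shift1: "(\<Sum>i\<le>m. f (i+1)) = (\<Sum>k\<in>{1..<m+2}. (f::nat\<Rightarrow>nat) k)"
  by (rule sum.reindex_bij_witness[where i="\<lambda>k. k - 1" and j="\<lambda>i. i+1"]) auto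

lemma cA0: "cA 0 \<le> 1"
proof -
  have "clA {..<0} \<subseteq> {{}}" unfolding clA_def using ok_empty by auto
  then have "card (clA {..<0}) \<le> card {{}::nat set set}" by (intro card_mono) auto
  then show ?thesis unfolding cA_def by simp
qed

lemma cG_small: "n \<le> 1 \<Longrightarrow> cG n = 0"
  using decG[of n] unfolding cG_def by simp

lemma cX_small: "n \<le> 2 \<Longrightarrow> cX n = 0"
  using decX[of n] unfolding cX_def by simp

lemma hG: "cG (m+2) \<le> (\<Sum>i\<le>m. cG (i+1) * cA (m-i) + cA i * (cA (m-i) + cG (m-i+1)))"
proof -
  have "cG (m+2) \<le> (\<Sum>k\<in>{1..<m+2}. card (clGm {1..k}) * card (clA {k<..<m+2})
     + card (clA {1..<k}) * (card (clA {k<..<m+2}) + card (clG {k..<m+2})))"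
    using decG[of "m+2"] unfolding cG_def by simp
  also have "\<dots> \<le> (\<Sum>k\<in>{1..<m+2}. cG k * cA (m+1-k) + cA (k-1) * (cA (m+1-k) + cG (m+2-k)))"
  proof (rule sum_mono)
    fix k assume "k \<in> {1..<m+2}"
    have a: "card (clGm {1..k}) \<le> cG k" using inv_Gm[of "{1..k}"] by simp
    have b: "card (clA {k<..<m+2}) \<le> cA (m+1-k)" using inv_A[of "{k<..<m+2}"] by simp
    have c: "card (clA {1..<k}) \<le> cA (k-1)" using inv_A[of "{1..<k}"] by simp
    have d: "card (clG {k..<m+2}) \<le> cG (m+2-k)" using inv_G[of "{k..<m+2}"] by simp
    show "card (clGm {1..k}) * card (clA {k<..<m+2}) + card (clA {1..<k}) * (card (clA {k<..<m+2}) + card (clG {k..<m+2}))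
        \<le> cG k * cA (m+1-k) + cA (k-1) * (cA (m+1-k) + cG (m+2-k))"
      using a b c d by (intro add_mono mult_le_mono) auto
  qed
  also have "\<dots> = (\<Sum>i\<le>m. cG (i+1) * cA (m-i) + cA i * (cA (m-i) + cG (m-i+1)))"
  proof -
    have "(\<Sum>i\<le>m. cG (i+1) * cA (m-i) + cA i * (cA (m-i) + cG (m-i+1)))
        = (\<Sum>i\<le>m. cG (i+1) * cA (m+1-(i+1)) + cA (i+1-1) * (cA (m+1-(i+1)) + cG (m+2-(i+1))))"
      by (intro sum.cong refl) (simp add: Suc_diff_le)
    then show ?thesis using sum_shift1[where m=m and f="\<lambda>k. cG k * cA (m+1-k) + cA (k-1) * (cA (m+1-k) + cG (m+2-k))"] by simp
  qed
  finally show ?thesis .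
qed

lemma hX: "cX (m+3) \<le> (\<Sum>l\<le>m. cG (l+1) * cG (m-l+1) + cA l * (cX (m-l+2) + cG (m-l+1)))"
proof -
  have "cX (m+3) \<le> (\<Sum>k\<in>{1..<m+2}. card (clGm {1..k}) * card (clGm {k<..<m+3})
     + card (clA {1..<k}) * (card (clX {k..<m+3}) + card (clGm {k<..<m+3})))"
    using decX[of "m+3"] unfolding cX_def by simp
  also have "\<dots> \<le> (\<Sum>k\<in>{1..<m+2}. cG k * cG (m+2-k) + cA (k-1) * (cX (m+3-k) + cG (m+2-k)))"
  proof (rule sum_mono)
    fix k assume "k \<in> {1..<m+2}"
    have a: "card (clGm {1..k}) \<le> cG k" using inv_Gm[of "{1..k}"] by simp
    have b: "card (clGm {k<..<m+3}) \<le> cG (m+2-k)" using inv_Gm[of "{k<..<m+3}"] by simp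
    have c: "card (clA {1..<k}) \<le> cA (k-1)" using inv_A[of "{1..<k}"] by simp
    have d: "card (clX {k..<m+3}) \<le> cX (m+3-k)" using inv_X[of "{k..<m+3}"] by simp
    show "card (clGm {1..k}) * card (clGm {k<..<m+3}) + card (clA {1..<k}) * (card (clX {k..<m+3}) + card (clGm {k<..<m+3}))
        \<le> cG k * cG (m+2-k) + cA (k-1) * (cX (m+3-k) + cG (m+2-k))"
      using a b c d by (intro add_mono mult_le_mono) auto
  qed
  also have "\<dots> = (\<Sum>l\<le>m. cG (l+1) * cG (m-l+1) + cA l * (cX (m-l+2) + cG (m-l+1)))"
  proof -
    have "(\<Sum>l\<le>m. cG (l+1) * cG (m-l+1) + cA l * (cX (m-l+2) + cG (m-l+1)))
        = (\<Sum>l\<le>m. cG (l+1) * cG (m+2-(l+1)) + cA (l+1-1) * (cX (m+3-(l+1)) + cG (m+2-(l+1))))"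
      by (intro sum.cong refl) (simp add: Suc_diff_le)
    then show ?thesis using sum_shift1[where m=m and f="\<lambda>k. cG k * cG (m+2-k) + cA (k-1) * (cX (m+3-k) + cG (m+2-k))"] by simp
  qed
  finally show ?thesis .
qed

lemma hA_gen: "0 < n \<Longrightarrow> cA n \<le> cA (n-1) + cG n + (\<Sum>p\<in>Pairs n. TT n (fst p) (snd p))"
proof -
  assume "0 < n"
  have "card (clA {1..<n}) \<le> cA (n-1)" using inv_A[of "{1..<n}"] by simp
  then show ?thesis using decA[OF \<open>0 < n\<close>] decG2[of n] unfolding cA_def cG_def by linarith
qed

lemma TT_le: assumes "0 < m1" "m1 < m2" "m2 < n"
  shows "TT n m1 m2 \<le> triT cA cG cX (m1-1) (m2-m1-1) (n-1-m2)"
proof -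
  have a1: "card (clA {1..<m1}) \<le> cA (m1-1)" using inv_A[of "{1..<m1}"] by simp
  have g1: "card (clGm {1..m1}) \<le> cG (m1-1+1)" using inv_Gm[of "{1..m1}"] assms by (simp add: Suc_diff_1)
  have aM: "card (clA {m1<..<m2}) \<le> cA (m2-m1-1)" using inv_A[of "{m1<..<m2}"] by simp
  have a3: "card (clA {m2<..<n}) \<le> cA (n-1-m2)" using inv_A[of "{m2<..<n}"] by simp
  have "n-1-m2+1 = n - m2" using assms by simp
  then have g3: "card (clG {m2..<n}) \<le> cG (n-1-m2+1)" using inv_G[of "{m2..<n}"] by simp
  have e2: "m2-m1-1+1 = m2 - m1" "m2-m1-1+2 = m2 - m1 + 1" using assms by simp_all
  have gM: "card (clGm {m1<..m2}) \<le> cG (m2-m1-1+1)" using inv_Gm[of "{m1<..m2}"] e2 by simp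
  have gM': "card (clG {m1..<m2}) \<le> cG (m2-m1-1+1)" using inv_G[of "{m1..<m2}"] e2 by simp
  have c: "card {m1..m2} = m2-m1-1+2" using assms by simp
  have xM: "card (clX {m1..m2}) \<le> cX (m2-m1-1+2)" using inv_X[of "{m1..m2}"] unfolding c by simp
  define l where "l = m1 - 1"
  define k where "k = m2 - m1 - 1"
  define r where "r = n - 1 - m2"
  have "TT n m1 m2 \<le> (cA l + cG (l+1)) * (cA k * (cA r + cG (r+1))) + (cA l + cG (l+1)) * (cG (k+1) * cA r)
      + cA l * (cG (k+1) * (cA r + cG (r+1))) + cA l * (cX (k+2) * cA r)"
    unfolding TT_def l_def k_def r_def using a1 g1 aM a3 g3 gM gM' xM
    by (intro add_mono mult_le_mono) auto
  also have "\<dots> = triT cA cG cX l k r" unfolding triT_def by (simp add: algebra_simps)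
  finally show ?thesis unfolding l_def k_def r_def .
qed

lemma ssb: "1 < b \<Longrightarrow> Suc (Suc (b - 2)) = (b::nat)"
  by arith

lemma Pairs_reindex: "(\<Sum>p\<in>Pairs (m+3). g (fst p) (snd p)) = (\<Sum>l\<le>m. \<Sum>k\<le>m-l. g (l+1) (l+k+2))"
proof -
  have "(\<Sum>p\<in>Pairs (m+3). g (fst p) (snd p)) = (\<Sum>q\<in>Sigma {..m} (\<lambda>l. {..m-l}). g (fst q + 1) (fst q + snd q + 2))"
    by (rule sum.reindex_bij_witness[where j="\<lambda>p. (fst p - 1, snd p - fst p - 1)" and i="\<lambda>q. (fst q + 1, fst q + snd q + 2)"])
      (auto simp: Pairs_def ssb)
  also have "\<dots> = (\<Sum>l\<le>m. \<Sum>k\<le>m-l. g (l+1) (l+k+2))"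
    by (subst sum.Sigma) (simp_all add: split_beta)
  finally show ?thesis .
qed

lemma hA: "cA (m+3) \<le> cA (m+2) + cG (m+3) + (\<Sum>l\<le>m. \<Sum>k\<le>m-l. triT cA cG cX l k (m-l-k))"
proof -
  have "(\<Sum>p\<in>Pairs (m+3). TT (m+3) (fst p) (snd p)) \<le> (\<Sum>p\<in>Pairs (m+3). triT cA cG cX (fst p - 1) (snd p - fst p - 1) (m+3-1-snd p))"
    by (intro sum_mono TT_le) (auto simp: Pairs_def)
  also have "\<dots> = (\<Sum>l\<le>m. \<Sum>k\<le>m-l. triT cA cG cX (l+1-1) (l+k+2-(l+1)-1) (m+3-1-(l+k+2)))"
    by (rule Pairs_reindex)
  also have "\<dots> = (\<Sum>l\<le>m. \<Sum>k\<le>m-l. triT cA cG cX l k (m-l-k))"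
    by (intro sum.cong refl) simp
  finally show ?thesis using hA_gen[of "m+3"] by simp
qed

lemma hA12: "cA 1 \<le> cA 0 + cG 1" "cA 2 \<le> cA 1 + cG 2"
proof -
  have "Pairs 1 = {}" "Pairs 2 = {}" unfolding Pairs_def by auto
  then show "cA 1 \<le> cA 0 + cG 1" "cA 2 \<le> cA 1 + cG 2" using hA_gen[of 1] hA_gen[of 2] by simp_all
qed

theorem count_bound: "real (cA n) \<le> (159333/100000) * (5610718614/1000000000)^n"
  by (rule analytic[where cG=cG and cX=cX])
    (use cA0 hA12 hA cG_small hG cX_small hX in auto)


definition cross :: "point \<Rightarrow> point \<Rightarrow> point \<Rightarrow> real" where
  "cross a b c = (fst b - fst a) * (snd c - snd a) - (snd b - snd a) * (fst c - fst a)"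

lemma cross_cyc: "cross a b c = cross b c a"
  unfolding cross_def by (simp add: algebra_simps)

lemma cross_swap: "cross a c b = - cross a b c"
  unfolding cross_def by (simp add: algebra_simps)

lemma convex_position_sub: "convex_position S \<Longrightarrow> T \<subseteq> S \<Longrightarrow> p \<in> T \<Longrightarrow> p \<notin> convex hull (T - {p})"
  unfolding convex_position_def by (meson Diff_mono hull_mono in_mono order_refl)

lemma in_hull3:
  fixes a b c p :: point
  assumes "0 < cross a b c" "0 \<le> cross p b c" "0 \<le> cross a p c" "0 \<le> cross a b p"
  shows "p \<in> convex hull {a,b,c}"
proof -
  define D where "D = cross a b c"
  define u where "u = cross p b c / D"
  define v where "v = cross a p c / D"
  define w where "w = cross a b p / D"
  have D0: "D > 0" unfolding D_def using assms by simp
  have nn: "0 \<le> u" "0 \<le> v" "0 \<le> w" unfolding u_def v_def w_def using assms D0 by simp_all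
  have i1: "cross p b c + cross a p c + cross a b p = D" unfolding D_def cross_def by (simp add: algebra_simps)
  have i2: "D * fst p = cross p b c * fst a + cross a p c * fst b + cross a b p * fst c"
    unfolding D_def cross_def by (simp add: algebra_simps)
  have i3: "D * snd p = cross p b c * snd a + cross a p c * snd b + cross a b p * snd c"
    unfolding D_def cross_def by (simp add: algebra_simps)
  have s: "u + v + w = 1" unfolding u_def v_def w_def using D0 i1 by (simp add: add_divide_distrib[symmetric])
  have e1: "fst p = u * fst a + v * fst b + w * fst c"
  proof -
    have "fst p = (D * fst p) / D" using D0 by simp
    also have "\<dots> = u * fst a + v * fst b + w * fst c" unfolding i2 u_def v_def w_def by (simp add: add_divide_distrib)
    finally show ?thesis .
  qed
  have e2: "snd p = u * snd a + v * snd b + w * snd c"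
  proof -
    have "snd p = (D * snd p) / D" using D0 by simp
    also have "\<dots> = u * snd a + v * snd b + w * snd c" unfolding i3 u_def v_def w_def by (simp add: add_divide_distrib)
    finally show ?thesis .
  qed
  have "p = u *\<^sub>R a + v *\<^sub>R b + w *\<^sub>R c" using e1 e2 by (simp add: prod_eq_iff)
  then show ?thesis unfolding convex_hull_3 using nn s by blast
qed


lemma seg_cross:
  fixes a b c d :: point
  assumes "0 < cross a b c" "0 < cross a b d" "0 < cross a c d" "0 < cross b c d"
  shows "convex hull {a,c} \<inter> convex hull {b,d} \<noteq> {}"
proof -
  define d1 where "d1 = cross a b d"
  define d2 where "d2 = cross b c d"
  define e1 where "e1 = cross a b c"
  define e2 where "e2 = cross a c d"
  have pos: "0 < d1" "0 < d2" "0 < e1" "0 < e2" unfolding d1_def d2_def e1_def e2_def using assms by simp_all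
  have sum: "d1 + d2 = e1 + e2" unfolding d1_def d2_def e1_def e2_def cross_def by (simp add: algebra_simps)
  have id1: "d2 * fst a + d1 * fst c = e2 * fst b + e1 * fst d"
    unfolding d1_def d2_def e1_def e2_def cross_def by (simp add: algebra_simps)
  have id2: "d2 * snd a + d1 * snd c = e2 * snd b + e1 * snd d"
    unfolding d1_def d2_def e1_def e2_def cross_def by (simp add: algebra_simps)
  define S where "S = d1 + d2"
  have S0: "0 < S" unfolding S_def using pos by simp
  define X where "X = (d2 / S) *\<^sub>R a + (d1 / S) *\<^sub>R c"
  have X2: "X = (e2 / S) *\<^sub>R b + (e1 / S) *\<^sub>R d"
  proof -
    have "fst X = (d2 * fst a + d1 * fst c) / S" "snd X = (d2 * snd a + d1 * snd c) / S"
      unfolding X_def by (simp_all add: add_divide_distrib)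
    then have "fst X = (e2 * fst b + e1 * fst d) / S" "snd X = (e2 * snd b + e1 * snd d) / S"
      using id1 id2 by simp_all
    then show ?thesis by (simp add: prod_eq_iff add_divide_distrib)
  qed
  have "X \<in> convex hull {a,c}"
    unfolding convex_hull_2 X_def using pos S0 by (intro CollectI exI[of _ "d2/S"] exI[of _ "d1/S"])
      (simp add: S_def add_divide_distrib[symmetric])
  moreover have "X \<in> convex hull {b,d}"
    unfolding convex_hull_2 X2 using pos S0 sum by (intro CollectI exI[of _ "e2/S"] exI[of _ "e1/S"])
      (simp add: S_def add_divide_distrib[symmetric])
  ultimately show ?thesis by blast
qed


definition Hp :: "point \<Rightarrow> point \<Rightarrow> bool" where
  "Hp p0 q \<longleftrightarrow> fst q > fst p0 \<or> (fst q = fst p0 \<and> snd q > snd p0)"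

definition key :: "point \<Rightarrow> point \<Rightarrow> real" where
  "key p0 q = (snd q - snd p0) / ((fst q - fst p0) + \<bar>snd q - snd p0\<bar>)"

lemma lexmin: assumes "finite S" "S \<noteq> {}"
  shows "\<exists>p0\<in>S. \<forall>q\<in>S. q \<noteq> p0 \<longrightarrow> Hp p0 q"
proof -
  define x0 where "x0 = Min (fst ` S)"
  define T where "T = {p\<in>S. fst p = x0}"
  have x0S: "x0 \<in> fst ` S" unfolding x0_def using assms by simp
  have "T \<noteq> {}" unfolding T_def using x0S by auto
  moreover have "finite T" unfolding T_def using assms by simp
  ultimately have y0T: "Min (snd ` T) \<in> snd ` T" by simp
  define y0 where "y0 = Min (snd ` T)"
  from y0T obtain p0 where p0': "p0 \<in> T" "Min (snd ` T) = snd p0" by (rule imageE)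
  then have p0: "p0 \<in> T" "snd p0 = y0" unfolding y0_def by simp_all
  have "\<forall>q\<in>S. q \<noteq> p0 \<longrightarrow> Hp p0 q"
  proof (intro ballI impI)
    fix q assume q: "q \<in> S" "q \<noteq> p0"
    have fp0: "fst p0 = x0" using p0 unfolding T_def by simp
    have "x0 \<le> fst q" unfolding x0_def using assms q by simp
    show "Hp p0 q"
    proof (cases "fst q = x0")
      case True
      then have "q \<in> T" unfolding T_def using q by simp
      then have "y0 \<le> snd q" unfolding y0_def using \<open>finite T\<close> by simp
      moreover have "snd q \<noteq> y0" using q(2) True fp0 p0(2) by (metis prod_eqI)
      ultimately show ?thesis unfolding Hp_def using True fp0 p0(2) by simp
    next
      case False
      then show ?thesis unfolding Hp_def using fp0 \<open>x0 \<le> fst q\<close> by simp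
    qed
  qed
  moreover have "p0 \<in> S" using p0 unfolding T_def by simp
  ultimately show ?thesis by blast
qed

lemma key_den: "Hp p0 q \<Longrightarrow> 0 < (fst q - fst p0) + \<bar>snd q - snd p0\<bar>"
  unfolding Hp_def by auto

lemma frac_lt: "0 < b \<Longrightarrow> 0 < d \<Longrightarrow> a/b < c/d \<Longrightarrow> a*d < c*(b::real)"
proof -
  assume h: "0 < b" "0 < d" "a/b < c/d"
  then have "a/b * (b*d) < c/d * (b*d)" by (intro mult_strict_right_mono) auto
  then show ?thesis using h by (simp add: field_simps)
qed

lemma key_cross: assumes "Hp p0 q" "Hp p0 r" "key p0 q < key p0 r"
  shows "0 < cross p0 q r"
proof -
  define ux where "ux = fst q - fst p0"
  define uy where "uy = snd q - snd p0"
  define vx where "vx = fst r - fst p0"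
  define vy where "vy = snd r - snd p0"
  have c: "cross p0 q r = ux * vy - uy * vx" unfolding cross_def ux_def uy_def vx_def vy_def by simp
  have hq: "ux > 0 \<or> (ux = 0 \<and> uy > 0)" and hr: "vx > 0 \<or> (vx = 0 \<and> vy > 0)"
    using assms(1,2) unfolding Hp_def ux_def uy_def vx_def vy_def by auto
  have dq: "0 < ux + \<bar>uy\<bar>" and dr: "0 < vx + \<bar>vy\<bar>" using hq hr by auto
  have k: "uy / (ux + \<bar>uy\<bar>) < vy / (vx + \<bar>vy\<bar>)" using assms(3) unfolding key_def ux_def uy_def vx_def vy_def .
  then have k2: "uy * (vx + \<bar>vy\<bar>) < vy * (ux + \<bar>uy\<bar>)" using dq dr frac_lt by blast
  show ?thesis unfolding c
  proof (cases "0 \<le> uy")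
    case True
    show "0 < ux * vy - uy * vx"
    proof (cases "0 \<le> vy")
      case True
      then show ?thesis using k2 \<open>0 \<le> uy\<close> by (simp add: algebra_simps)
    next
      case False
      have "uy / (ux + \<bar>uy\<bar>) \<ge> 0" using True dq by simp
      moreover have "vy / (vx + \<bar>vy\<bar>) < 0" using False dr by (simp add: divide_neg_pos)
      ultimately show ?thesis using k by simp
    qed
  next
    case False
    show "0 < ux * vy - uy * vx"
    proof (cases "0 \<le> vy")
      case True
      have ux0: "ux > 0" using hq False by auto
      have "0 \<le> ux * vy" using ux0 True by simp
      have "0 \<le> vx" using hr by auto
      then have "uy * vx \<le> 0" using False by (intro mult_nonpos_nonneg) auto
      then have "0 \<le> - uy * vx" by simp
      show ?thesis
      proof (cases "vy = 0")
        case True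
        then have "vx > 0" using hr by auto
        then have "uy * vx < 0" using \<open>\<not> 0 \<le> uy\<close> by (intro mult_neg_pos) auto
        then have "0 < - uy * vx" by simp
        then show ?thesis using True by simp
      next
        case False
        then have "0 < ux * vy" using ux0 \<open>0 \<le> vy\<close> by simp
        then show ?thesis using \<open>0 \<le> - uy * vx\<close> by simp
      qed
    next
      case False
      then show ?thesis using k2 \<open>\<not> 0 \<le> uy\<close> by (simp add: algebra_simps)
    qed
  qed
qed

lemma div_nonneg_imp: "0 < b \<Longrightarrow> 0 \<le> a/b \<Longrightarrow> 0 \<le> (a::real)"
proof -
  assume h: "0 < b" "0 \<le> a/b"
  have "a = (a/b)*b" using h by simp
  then show ?thesis using mult_nonneg_nonneg[of "a/b" b] h by simp
qed

lemma key_eq_cross: assumes "Hp p0 q" "Hp p0 r" "key p0 q = key p0 r"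
  shows "cross p0 q r = 0"
proof -
  define ux where "ux = fst q - fst p0"
  define uy where "uy = snd q - snd p0"
  define vx where "vx = fst r - fst p0"
  define vy where "vy = snd r - snd p0"
  have c: "cross p0 q r = ux * vy - uy * vx" unfolding cross_def ux_def uy_def vx_def vy_def by simp
  have hq: "ux > 0 \<or> (ux = 0 \<and> uy > 0)" and hr: "vx > 0 \<or> (vx = 0 \<and> vy > 0)"
    using assms(1,2) unfolding Hp_def ux_def uy_def vx_def vy_def by auto
  have dq: "0 < ux + \<bar>uy\<bar>" and dr: "0 < vx + \<bar>vy\<bar>" using hq hr by auto
  have k: "uy / (ux + \<bar>uy\<bar>) = vy / (vx + \<bar>vy\<bar>)" using assms(3) unfolding key_def ux_def uy_def vx_def vy_def .
  then have k2: "uy * (vx + \<bar>vy\<bar>) = vy * (ux + \<bar>uy\<bar>)" using dq dr frac_eq_eq by (metis less_irrefl)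
  have s: "(0 \<le> uy) = (0 \<le> vy)"
  proof
    assume "0 \<le> uy"
    then have "uy / (ux + \<bar>uy\<bar>) \<ge> 0" using dq by simp
    then have "0 \<le> vy / (vx + \<bar>vy\<bar>)" using k by simp
    then show "0 \<le> vy" using dr div_nonneg_imp by blast
  next
    assume "0 \<le> vy"
    then have "vy / (vx + \<bar>vy\<bar>) \<ge> 0" using dr by simp
    then have "0 \<le> uy / (ux + \<bar>uy\<bar>)" using k by simp
    then show "0 \<le> uy" using dq div_nonneg_imp by blast
  qed
  show ?thesis unfolding c
  proof (cases "0 \<le> uy")
    case True
    then show "ux * vy - uy * vx = 0" using k2 s by (simp add: algebra_simps)
  next
    case False
    then show "ux * vy - uy * vx = 0" using k2 s by (simp add: algebra_simps)
  qed
qed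

lemma in_seg: "0 \<le> t \<Longrightarrow> t \<le> 1 \<Longrightarrow> (1 - t) *\<^sub>R a + t *\<^sub>R b \<in> convex hull {a, b::point}"
  unfolding convex_hull_2 by force

lemma collinear_excl:
  assumes cp: "convex_position S" and S: "p0 \<in> S" "q \<in> S" "r \<in> S" "q \<noteq> r" "q \<noteq> p0" "r \<noteq> p0"
    and H: "Hp p0 q" "Hp p0 r" and c0: "cross p0 q r = 0"
  shows False
proof -
  define ux where "ux = fst q - fst p0"
  define uy where "uy = snd q - snd p0"
  define vx where "vx = fst r - fst p0"
  define vy where "vy = snd r - snd p0"
  have c: "ux * vy - uy * vx = 0" using c0 unfolding cross_def ux_def uy_def vx_def vy_def by simp
  have hq: "ux > 0 \<or> (ux = 0 \<and> uy > 0)" and hr: "vx > 0 \<or> (vx = 0 \<and> vy > 0)"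
    using H unfolding Hp_def ux_def uy_def vx_def vy_def by auto
  obtain t where t: "t > 0" "vx = t * ux" "vy = t * uy"
  proof (cases "ux > 0")
    case True
    have "vx \<noteq> 0"
    proof
      assume "vx = 0"
      then have "vy > 0" using hr by simp
      then have "ux * vy > 0" using True by simp
      then show False using c \<open>vx = 0\<close> by (metis diff_zero less_irrefl mult_zero_right)
    qed
    then have "vx > 0" using hr by auto
    show ?thesis
    proof (rule that[of "vx / ux"])
      show "vx / ux > 0" using True \<open>vx > 0\<close> by simp
      show "vx = vx / ux * ux" using True by simp
      show "vy = vx / ux * uy" using True c by (simp add: field_simps)
    qed
  next
    case False
    then have "ux = 0" "uy > 0" using hq by auto
    then have "vx = 0" using c by simp
    then have "vy > 0" using hr by simp
    show ?thesis
    proof (rule that[of "vy / uy"])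
      show "vy / uy > 0" using \<open>vy > 0\<close> \<open>uy > 0\<close> by simp
      show "vx = vy / uy * ux" using \<open>vx = 0\<close> \<open>ux = 0\<close> by simp
      show "vy = vy / uy * uy" using \<open>uy > 0\<close> by simp
    qed
  qed
  show False
  proof (cases "t \<le> 1")
    case True
    have "r = (1 - t) *\<^sub>R p0 + t *\<^sub>R q"
      using t unfolding vx_def vy_def ux_def uy_def by (simp add: prod_eq_iff algebra_simps)
    then have "r \<in> convex hull {p0, q}" using in_seg[of t p0 q] True t(1) by simp
    moreover have "convex hull {p0, q} \<subseteq> convex hull (S - {r})" using S by (intro hull_mono) auto
    ultimately show False using cp S(3) unfolding convex_position_def by blast
  next
    case False
    have "q = (1 - 1/t) *\<^sub>R p0 + (1/t) *\<^sub>R r"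
      using t unfolding vx_def vy_def ux_def uy_def by (simp add: prod_eq_iff field_simps)
    then have "q \<in> convex hull {p0, r}" using in_seg[of "1/t" p0 r] False t(1) by simp
    moreover have "convex hull {p0, r} \<subseteq> convex hull (S - {q})" using S by (intro hull_mono) auto
    ultimately show False using cp S(2) unfolding convex_position_def by blast
  qed
qed


lemma convex_order:
  assumes fin: "finite S" and cp: "convex_position S"
  shows "\<exists>ps. distinct ps \<and> set ps = S \<and>
     (\<forall>i j k. i < j \<longrightarrow> j < k \<longrightarrow> k < length ps \<longrightarrow> 0 < cross (ps!i) (ps!j) (ps!k))"
proof (cases "S = {}")
  case True
  then show ?thesis by (intro exI[of _ "[]"]) simp
next
  case False
  obtain p0 where p0: "p0 \<in> S" "\<forall>q\<in>S. q \<noteq> p0 \<longrightarrow> Hp p0 q" using lexmin[OF fin False] by blast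
  define S' where "S' = S - {p0}"
  have H: "Hp p0 q" if "q \<in> S'" for q using p0 that unfolding S'_def by blast
  have inj: "inj_on (key p0) S'"
  proof (rule inj_onI)
    fix q r assume qr: "q \<in> S'" "r \<in> S'" "key p0 q = key p0 r"
    show "q = r"
    proof (rule ccontr)
      assume "q \<noteq> r"
      have "cross p0 q r = 0" by (rule key_eq_cross[OF H[OF qr(1)] H[OF qr(2)] qr(3)])
      then show False using collinear_excl[OF cp p0(1) _ _ \<open>q \<noteq> r\<close> _ _ H[OF qr(1)] H[OF qr(2)]] qr
        unfolding S'_def by blast
    qed
  qed
  define K where "K = key p0 ` S'"
  define L where "L = sorted_list_of_set K"
  define f where "f = the_inv_into S' (key p0)"
  have finK: "finite K" unfolding K_def S'_def using fin by simp
  have L: "set L = K" "distinct L" "sorted_wrt (<) L" unfolding L_def using finK by simp_all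
  have fK: "f y \<in> S'" if "y \<in> K" for y unfolding f_def using the_inv_into_into[OF inj, of y S'] that K_def by simp
  have kf: "key p0 (f y) = y" if "y \<in> K" for y unfolding f_def using f_the_inv_into_f[OF inj] that K_def by simp
  have fk: "f (key p0 q) = q" if "q \<in> S'" for q unfolding f_def using the_inv_into_f_f[OF inj that] .
  define ps where "ps = p0 # map f L"
  have injf: "inj_on f K"
  proof (rule inj_onI)
    fix y1 y2 assume "y1 \<in> K" "y2 \<in> K" "f y1 = f y2"
    then show "y1 = y2" using kf by metis
  qed
  have dist: "distinct ps"
  proof -
    have "distinct (map f L)" using L injf by (simp add: distinct_map)
    moreover have "p0 \<notin> set (map f L)" using fK L(1) unfolding S'_def by auto
    ultimately show ?thesis unfolding ps_def by simp
  qed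
  have setps: "set ps = S"
  proof -
    have "f ` K = S'"
    proof
      show "f ` K \<subseteq> S'" using fK by blast
      show "S' \<subseteq> f ` K"
      proof
        fix q assume "q \<in> S'"
        then have "key p0 q \<in> K" "f (key p0 q) = q" unfolding K_def using fk by auto
        then show "q \<in> f ` K" by (simp add: rev_image_eqI)
      qed
    qed
    then show ?thesis unfolding ps_def S'_def using L(1) p0(1) by auto
  qed
  have len: "length ps = Suc (length L)" unfolding ps_def by simp
  have psS: "ps ! (Suc t) = f (L ! t)" if "t < length L" for t unfolding ps_def using that by simp
  have inS': "ps ! (Suc t) \<in> S'" if "t < length L" for t using psS[OF that] fK[of "L!t"] L(1) nth_mem[OF that] by simp
  have keyps: "key p0 (ps ! (Suc t)) = L ! t" if "t < length L" for t using psS[OF that] kf[of "L!t"] L(1) nth_mem[OF that] by simp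
  have c0: "0 < cross p0 (ps!a) (ps!b)" if "0 < a" "a < b" "b < length ps" for a b
  proof -
    define a' where "a' = a - 1"
    define b' where "b' = b - 1"
    have ab: "a = Suc a'" "b = Suc b'" unfolding a'_def b'_def using that by simp_all
    have ab': "a' < b'" "b' < length L" using that ab len by simp_all
    have a'L: "a' < length L" using ab' by simp
    then have "L ! a' < L ! b'" using L(3) ab' sorted_wrt_nth_less by blast
    then have "key p0 (ps!a) < key p0 (ps!b)" using keyps[OF a'L] keyps[OF ab'(2)] ab by simp
    then show ?thesis using key_cross[OF H[OF inS'[OF a'L]] H[OF inS'[OF ab'(2)]]] ab by simp
  qed
  have ps0: "ps ! 0 = p0" unfolding ps_def by simp
  have "\<forall>i j k. i < j \<longrightarrow> j < k \<longrightarrow> k < length ps \<longrightarrow> 0 < cross (ps!i) (ps!j) (ps!k)"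
  proof (intro allI impI)
    fix i j k assume ijk: "i < j" "j < k" "k < length ps"
    show "0 < cross (ps!i) (ps!j) (ps!k)"
    proof (cases "i = 0")
      case True
      then show ?thesis using c0[of j k] ijk ps0 by simp
    next
      case False
      show ?thesis
      proof (rule ccontr)
        assume "\<not> 0 < cross (ps!i) (ps!j) (ps!k)"
        then have n: "0 \<le> cross (ps!j) (ps!i) (ps!k)" using cross_swap[of "ps!i" "ps!j" "ps!k"] cross_cyc[of "ps!j" "ps!i" "ps!k"]
          cross_swap[of "ps!i" "ps!k" "ps!j"] by linarith
        have h1: "0 < cross p0 (ps!i) (ps!k)" using c0[of i k] ijk False by simp
        have h2: "0 < cross p0 (ps!j) (ps!k)" using c0[of j k] ijk False by simp
        have h3: "0 < cross p0 (ps!i) (ps!j)" using c0[of i j] ijk False by simp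
        have "ps!j \<in> convex hull {p0, ps!i, ps!k}" using in_hull3[OF h1 n] h2 h3 by simp
        moreover have "{p0, ps!i, ps!k} \<subseteq> S - {ps!j}"
        proof -
          have lens: "i < length ps" "j < length ps" "0 < length ps" using ijk by linarith+
          have "ps!i \<noteq> ps!j" using nth_eq_iff_index_eq[OF dist lens(1,2)] ijk by simp
          moreover have "ps!k \<noteq> ps!j" using nth_eq_iff_index_eq[OF dist ijk(3) lens(2)] ijk by simp
          moreover have "p0 \<noteq> ps!j" using nth_eq_iff_index_eq[OF dist lens(3,2)] ijk ps0 by simp
          moreover have "ps!i \<in> S" "ps!k \<in> S" using setps nth_mem[OF lens(1)] nth_mem[OF ijk(3)] by simp_all
          ultimately show ?thesis using p0(1) by simp
        qed
        then have "convex hull {p0, ps!i, ps!k} \<subseteq> convex hull (S - {ps!j})" by (rule hull_mono)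
        moreover have "ps!j \<in> S" using setps ijk nth_mem[of j ps] by simp
        ultimately show False using cp unfolding convex_position_def by blast
      qed
    qed
  qed
  then show ?thesis using dist setps by blast
qed


lemma acyc_img_rev: assumes "inj_on \<phi> V" "F \<subseteq> Pow V" "acyc (imgE \<phi> F)"
  shows "acyc F"
  unfolding acyc_def
proof (intro allI impI)
  fix F' assume h: "F' \<subseteq> F" "\<forall>v. deg F' v \<noteq> 1"
  have F'P: "F' \<subseteq> Pow V" using h(1) assms(2) by blast
  have "deg (imgE \<phi> F') w \<noteq> 1" for w
  proof (cases "w \<in> \<phi> ` V")
    case True
    then obtain v where "v \<in> V" "w = \<phi> v" by blast
    then show ?thesis using deg_img[OF assms(1) F'P] h(2) by simp
  next
    case False
    then show ?thesis using deg_img_out[OF F'P False] by simp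
  qed
  moreover have "imgE \<phi> F' \<subseteq> imgE \<phi> F" using h(1) by (rule imgE_sub)
  ultimately have "imgE \<phi> F' = {}" using assms(3) unfolding acyc_def by blast
  then show "F' = {}" unfolding imgE_def by simp
qed

lemma ncp_edges: "ncp_partition S E \<Longrightarrow> e \<in> E \<Longrightarrow> \<exists>a b. a \<in> S \<and> b \<in> S \<and> a \<noteq> b \<and> e = {a,b}"
  unfolding ncp_partition_def edges_on_def by blast

lemma ncp_Pow: "ncp_partition S E \<Longrightarrow> E \<subseteq> Pow S"
  using ncp_edges by blast

lemma comp_closed: assumes "ncp_partition S E" "w \<in> component S E a" "{w,x} \<in> E"
  shows "x \<in> component S E a"
proof -
  obtain a' b' where "a' \<in> S" "b' \<in> S" "{w,x} = {a',b'}" using ncp_edges[OF assms(1,3)] by blast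
  then have "x \<in> S" by (metis insertCI insert_absorb insert_iff singleton_iff doubleton_eq_iff)
  have "(a, w) \<in> (adj E)\<^sup>*" using assms(2) unfolding component_def by simp
  moreover have "(w, x) \<in> adj E" using assms(3) unfolding adj_def by simp
  ultimately have "(a, x) \<in> (adj E)\<^sup>*" by (rule rtrancl_into_rtrancl)
  then show ?thesis unfolding component_def using \<open>x \<in> S\<close> by simp
qed

lemma self_comp: "a \<in> S \<Longrightarrow> a \<in> component S E a"
  unfolding component_def by simp

lemma edge_sub_comp: assumes "ncp_partition S E" "u \<in> component S E a" "e \<in> E" "u \<in> e"
  shows "e \<subseteq> component S E a"
proof
  fix y assume "y \<in> e"
  show "y \<in> component S E a"
  proof (cases "y = u")
    case True then show ?thesis using assms(2) by simp
  next
    case False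
    obtain a' b' where "e = {a',b'}" using ncp_edges[OF assms(1,3)] by blast
    then have "e = {u,y}" using \<open>y \<in> e\<close> assms(4) False by auto
    then show ?thesis using comp_closed[OF assms(1,2)] assms(3) by simp
  qed
qed

lemma ncp_path: assumes "ncp_partition S E" "a \<in> S"
  obtains vs where "distinct vs" "set vs = component S E a"
    "{e\<in>E. e \<subseteq> component S E a} = {{vs ! i, vs ! Suc i} | i. Suc i < length vs}"
  using assms unfolding ncp_partition_def is_path_component_def by blast

lemma ncp_deg: assumes "ncp_partition S E" shows "deg E p \<le> 2"
proof (cases "p \<in> S")
  case False
  then show ?thesis using deg_out[OF ncp_Pow[OF assms] False] by simp
next
  case True
  define C where "C = component S E p"
  obtain vs where vs: "distinct vs" "set vs = C" "{e\<in>E. e \<subseteq> C} = {{vs ! i, vs ! Suc i} | i. Suc i < length vs}"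
    using ncp_path[OF assms True] unfolding C_def by blast
  have "p \<in> set vs" using vs(2) True unfolding C_def by (simp add: self_comp)
  then obtain t where t: "t < length vs" "vs ! t = p" by (metis in_set_conv_nth)
  have "{e\<in>E. p \<in> e} \<subseteq> (\<lambda>i. {vs ! i, vs ! Suc i}) ` {t, t - 1}"
  proof
    fix e assume "e \<in> {e\<in>E. p \<in> e}"
    then have e: "e \<in> E" "p \<in> e" by simp_all
    have "e \<subseteq> C" unfolding C_def by (rule edge_sub_comp[OF assms self_comp[OF True] e])
    then have "e \<in> {e\<in>E. e \<subseteq> C}" using e by simp
    then obtain i where i: "Suc i < length vs" "e = {vs ! i, vs ! Suc i}" unfolding vs(3) by blast
    then have "vs ! i = p \<or> vs ! Suc i = p" using e(2) by auto
    then have "i = t \<or> Suc i = t" using nth_eq_iff_index_eq[OF vs(1)] t i(1) by (metis Suc_lessD)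
    then have "i \<in> {t, t - 1}" by auto
    then show "e \<in> (\<lambda>i. {vs ! i, vs ! Suc i}) ` {t, t - 1}" using i(2) by blast
  qed
  then have "deg E p \<le> card ((\<lambda>i. {vs ! i, vs ! Suc i}) ` {t, t - 1})" unfolding deg_def
    by (intro card_mono) auto
  also have "\<dots> \<le> card {t, t - 1}" by (rule card_image_le) simp
  also have "\<dots> \<le> 2" by (simp add: card_insert_if)
  finally show ?thesis .
qed

lemma ncp_acyc: assumes "ncp_partition S E" "finite S" shows "acyc E"
  unfolding acyc_def
proof (intro allI impI)
  fix F' assume h: "F' \<subseteq> E" "\<forall>v. deg F' v \<noteq> 1"
  show "F' = {}"
  proof (rule ccontr)
    assume "F' \<noteq> {}"
    then obtain e where eF: "e \<in> F'" by blast
    then have eE: "e \<in> E" using h(1) by blast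
    obtain a b where ab: "a \<in> S" "b \<in> S" "a \<noteq> b" "e = {a,b}" using ncp_edges[OF assms(1) eE] by blast
    define C where "C = component S E a"
    obtain vs where vs: "distinct vs" "set vs = C" "{e\<in>E. e \<subseteq> C} = {{vs ! i, vs ! Suc i} | i. Suc i < length vs}"
      using ncp_path[OF assms(1) ab(1)] unfolding C_def by blast
    have "e \<subseteq> C" unfolding C_def by (rule edge_sub_comp[OF assms(1) self_comp[OF ab(1)] eE]) (simp add: ab)
    then have "e \<in> {e\<in>E. e \<subseteq> C}" using eE by simp
    then obtain i where i: "Suc i < length vs" "e = {vs ! i, vs ! Suc i}" unfolding vs(3) by blast
    define I where "I = {i. Suc i < length vs \<and> {vs ! i, vs ! Suc i} \<in> F'}"
    have "i \<in> I" unfolding I_def using i eF by simp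
    have finI: "finite I" unfolding I_def by (rule finite_subset[of _ "{..<length vs}"]) auto
    define i0 where "i0 = Min I"
    have i0I: "i0 \<in> I" unfolding i0_def using finI \<open>i \<in> I\<close> by (intro Min_in) auto
    have i0min: "i0 \<le> j" if "j \<in> I" for j unfolding i0_def using finI that by simp
    define u where "u = vs ! i0"
    have i0l: "Suc i0 < length vs" using i0I unfolding I_def by simp
    have uC: "u \<in> C" unfolding u_def using vs(2) i0l by (metis Suc_lessD nth_mem)
    have "{e\<in>F'. u \<in> e} = {{vs ! i0, vs ! Suc i0}}"
    proof
      show "{{vs ! i0, vs ! Suc i0}} \<subseteq> {e\<in>F'. u \<in> e}" using i0I unfolding I_def u_def by simp
      show "{e\<in>F'. u \<in> e} \<subseteq> {{vs ! i0, vs ! Suc i0}}"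
      proof
        fix e' assume "e' \<in> {e\<in>F'. u \<in> e}"
        then have e': "e' \<in> F'" "u \<in> e'" by simp_all
        then have e'E: "e' \<in> E" using h(1) by blast
        have "e' \<subseteq> C" unfolding C_def by (rule edge_sub_comp[OF assms(1) uC[unfolded C_def] e'E e'(2)])
        then have "e' \<in> {e\<in>E. e \<subseteq> C}" using e'E by simp
        then obtain j where j: "Suc j < length vs" "e' = {vs ! j, vs ! Suc j}" unfolding vs(3) by blast
        then have "vs ! j = u \<or> vs ! Suc j = u" using e'(2) by auto
        then have "j = i0 \<or> Suc j = i0" unfolding u_def using nth_eq_iff_index_eq[OF vs(1)] j(1) i0l
          by (metis Suc_lessD)
        moreover have "Suc j \<noteq> i0"
        proof
          assume "Suc j = i0"
          moreover have "j \<in> I" unfolding I_def using j e'(1) by simp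
          ultimately show False using i0min[of j] by simp
        qed
        ultimately have "j = i0" by simp
        then show "e' \<in> {{vs ! i0, vs ! Suc i0}}" using j(2) by simp
      qed
    qed
    then have "deg F' u = 1" unfolding deg_def by simp
    then show False using h(2)[rule_format, of u] by simp
  qed
qed


lemma transfer: assumes fin: "finite S" and cp: "convex_position S"
  shows "card {E. ncp_partition S E} \<le> cA (card S)"
proof -
  obtain ps where ps: "distinct ps" "set ps = S"
    "\<And>i j k. i < j \<Longrightarrow> j < k \<Longrightarrow> k < length ps \<Longrightarrow> 0 < cross (ps!i) (ps!j) (ps!k)"
    using convex_order[OF fin cp] by blast
  define n where "n = length ps"
  have cardS: "card S = n" unfolding n_def using distinct_card[OF ps(1)] ps(2) by simp
  define \<phi> where "\<phi> i = ps ! i" for i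
  have inj: "inj_on \<phi> {..<n}"
    unfolding \<phi>_def n_def by (rule inj_onI) (use nth_eq_iff_index_eq[OF ps(1)] in auto)
  have img: "\<phi> ` {..<n} = S" unfolding \<phi>_def n_def using ps(2) by (auto simp: set_conv_nth)
  define \<Psi> where "\<Psi> E = {e. e \<subseteq> {..<n} \<and> \<phi> ` e \<in> E}" for E
  have PsiP: "\<Psi> E \<subseteq> Pow {..<n}" for E unfolding \<Psi>_def by blast
  have bk: "imgE \<phi> (\<Psi> E) = E" if ncp: "ncp_partition S E" for E
  proof
    show "imgE \<phi> (\<Psi> E) \<subseteq> E" unfolding imgE_def \<Psi>_def by blast
    show "E \<subseteq> imgE \<phi> (\<Psi> E)"
    proof
      fix e assume "e \<in> E"
      then have eS: "e \<subseteq> S" using ncp_Pow[OF ncp] by blast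
      define e0 where "e0 = {i\<in>{..<n}. \<phi> i \<in> e}"
      have "\<phi> ` e0 = e"
      proof
        show "\<phi> ` e0 \<subseteq> e" unfolding e0_def by blast
        show "e \<subseteq> \<phi> ` e0"
        proof
          fix x assume "x \<in> e"
          then have "x \<in> \<phi> ` {..<n}" using eS img by blast
          then obtain i where "i \<in> {..<n}" "x = \<phi> i" by blast
          then show "x \<in> \<phi> ` e0" unfolding e0_def using \<open>x \<in> e\<close> by blast
        qed
      qed
      then have "e0 \<in> \<Psi> E" unfolding \<Psi>_def e0_def using \<open>e \<in> E\<close> by auto
      then show "e \<in> imgE \<phi> (\<Psi> E)" unfolding imgE_def using \<open>\<phi> ` e0 = e\<close> by force
    qed
  qed
  have okPsi: "ok {..<n} (\<Psi> E)" if ncp: "ncp_partition S E" for E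
  proof (rule okI)
    fix e assume "e \<in> \<Psi> E"
    then have e: "e \<subseteq> {..<n}" "\<phi> ` e \<in> E" unfolding \<Psi>_def by auto
    obtain x y where xy: "x \<in> S" "y \<in> S" "x \<noteq> y" "\<phi> ` e = {x,y}" using ncp_edges[OF ncp e(2)] by blast
    have "x \<in> \<phi> ` e" "y \<in> \<phi> ` e" using xy(4) by auto
    then obtain i j where ij: "i \<in> e" "\<phi> i = x" "j \<in> e" "\<phi> j = y" by (metis imageE)
    have "i \<noteq> j" using ij xy(3) by auto
    have "e = {i,j}"
    proof
      show "{i,j} \<subseteq> e" using ij by simp
      show "e \<subseteq> {i,j}"
      proof
        fix k assume "k \<in> e"
        then have "\<phi> k \<in> {x,y}" using xy(4) by blast
        then have "\<phi> k = \<phi> i \<or> \<phi> k = \<phi> j" using ij by auto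
        moreover have "k \<in> {..<n}" "i \<in> {..<n}" "j \<in> {..<n}" using e(1) \<open>k \<in> e\<close> ij(1,3) by auto
        ultimately have "k = i \<or> k = j" using inj_onD[OF inj] by metis
        then show "k \<in> {i,j}" by simp
      qed
    qed
    moreover have "i \<in> {..<n}" "j \<in> {..<n}" using e(1) ij by auto
    ultimately show "\<exists>a b. a \<in> {..<n} \<and> b \<in> {..<n} \<and> a < b \<and> e = {a,b}"
    proof (cases "i < j")
      case True
      then show ?thesis using \<open>e = {i,j}\<close> \<open>i \<in> {..<n}\<close> \<open>j \<in> {..<n}\<close> by blast
    next
      case False
      then have "j < i" using \<open>i \<noteq> j\<close> by simp
      moreover have "e = {j,i}" using \<open>e = {i,j}\<close> by (simp add: insert_commute)
      ultimately show ?thesis using \<open>i \<in> {..<n}\<close> \<open>j \<in> {..<n}\<close> by blast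
    qed
  next
    fix a b c d :: nat assume o: "a < b" "b < c" "c < d" "{a,c} \<in> \<Psi> E" "{b,d} \<in> \<Psi> E"
    have dn: "d < n" using o(5) unfolding \<Psi>_def by auto
    have E1: "{ps!a, ps!c} \<in> E" "{ps!b, ps!d} \<in> E" using o(4,5) unfolding \<Psi>_def \<phi>_def by auto
    have cr: "0 < cross (ps!a) (ps!b) (ps!c)" "0 < cross (ps!a) (ps!b) (ps!d)" "0 < cross (ps!a) (ps!c) (ps!d)"
      "0 < cross (ps!b) (ps!c) (ps!d)" using ps(3) o(1-3) dn unfolding n_def by simp_all
    have ne: "convex hull {ps!a, ps!c} \<inter> convex hull {ps!b, ps!d} \<noteq> {}" by (rule seg_cross[OF cr])
    have dl: "a < length ps" "b < length ps" "c < length ps" "d < length ps" using o dn unfolding n_def by simp_all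
    have dist: "ps!a \<noteq> ps!b" "ps!a \<noteq> ps!c" "ps!a \<noteq> ps!d" "ps!b \<noteq> ps!c" "ps!b \<noteq> ps!d" "ps!c \<noteq> ps!d"
      using nth_eq_iff_index_eq[OF ps(1) dl(1) dl(2)] nth_eq_iff_index_eq[OF ps(1) dl(1) dl(3)]
        nth_eq_iff_index_eq[OF ps(1) dl(1) dl(4)] nth_eq_iff_index_eq[OF ps(1) dl(2) dl(3)]
        nth_eq_iff_index_eq[OF ps(1) dl(2) dl(4)] nth_eq_iff_index_eq[OF ps(1) dl(3) dl(4)] o(1-3) by simp_all
    have "{ps!a, ps!c} \<noteq> {ps!b, ps!d}" using dist by (auto simp: doubleton_eq_iff)
    moreover have nc: "non_crossing E" using ncp unfolding ncp_partition_def by simp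
    ultimately have "convex hull {ps!a, ps!c} \<inter> convex hull {ps!b, ps!d} \<subseteq> {ps!a, ps!c} \<inter> {ps!b, ps!d}"
      using nc[unfolded non_crossing_def, rule_format, OF E1(1) E1(2)] by simp
    moreover have "{ps!a, ps!c} \<inter> {ps!b, ps!d} = {}" using dist by auto
    ultimately show False using ne by blast
  next
    fix v show "deg (\<Psi> E) v \<le> 2"
    proof (cases "v < n")
      case True
      then have "deg (\<Psi> E) v = deg (imgE \<phi> (\<Psi> E)) (\<phi> v)" using deg_img[OF inj PsiP, of v] by simp
      also have "\<dots> = deg E (\<phi> v)" using bk[OF ncp] by simp
      finally show ?thesis using ncp_deg[OF ncp] by simp
    next
      case False
      then show ?thesis using deg_out[OF PsiP, of v] by simp
    qed
  next
    have "acyc (imgE \<phi> (\<Psi> E))" using bk[OF ncp] ncp_acyc[OF ncp fin] by simp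
    then show "acyc (\<Psi> E)" by (rule acyc_img_rev[OF inj PsiP])
  qed
  have "card {E. ncp_partition S E} \<le> card (clA {..<n})"
  proof (rule card_inj_on_le)
    show "inj_on \<Psi> {E. ncp_partition S E}"
    proof (rule inj_onI)
      fix E1 E2 assume h: "E1 \<in> {E. ncp_partition S E}" "E2 \<in> {E. ncp_partition S E}" "\<Psi> E1 = \<Psi> E2"
      have "E1 = imgE \<phi> (\<Psi> E1)" using bk[of E1] h(1) by simp
      also have "\<dots> = imgE \<phi> (\<Psi> E2)" using h(3) by simp
      also have "\<dots> = E2" using bk[of E2] h(2) by simp
      finally show "E1 = E2" .
    qed
    show "\<Psi> ` {E. ncp_partition S E} \<subseteq> clA {..<n}" unfolding clA_def using okPsi by blast
    show "finite (clA {..<n})" by (rule cl_finite) simp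
  qed
  then show ?thesis unfolding cA_def cardS .
qed

theorem theorem1:
  "\<exists>C k. \<forall>S :: point set. finite S \<and> convex_position S \<longrightarrow>
     real (card {E. ncp_partition S E})
       \<le> C * real (card S + 1) ^ k * 5.610718614 ^ card S"
proof (intro exI[of _ "159333/100000"] exI[of _ "0::nat"] allI impI)
  fix S :: "point set" assume h: "finite S \<and> convex_position S"
  have "real (card {E. ncp_partition S E}) \<le> real (cA (card S))"
    using transfer[OF conjunct1[OF h] conjunct2[OF h]] by simp
  also have "\<dots> \<le> (159333/100000) * (5610718614/1000000000)^(card S)" by (rule count_bound)
  also have "\<dots> = (159333/100000) * real (card S + 1) ^ 0 * 5.610718614 ^ card S" by simp
  finally show "real (card {E. ncp_partition S E}) \<le> (159333/100000) * real (card S + 1) ^ 0 * 5.610718614 ^ card S" .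
qed


end
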